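(* Let $g\ge1$, $n\ge1$. The set $\mathcal{SS}(S_{g,n})$ of (conjugacy classes of) simple-stable representations is an open subset of the character variety $\mathcal{X}(S_{g,n})$.
   Context: $\pi_1(S_{g,n})=\langle a_1,b_1,\dots,a_g,b_g,c_1,\dots,c_n\mid\prod[a_i,b_i]\prod c_j\rangle$, free of rank $2g+n-1$. $\mathcal{X}(S_{g,n})$ is the space of non-elementary representations $\pi_1(S_{g,n})\to\mathrm{PSL}(2,\mathbb{R})$ (image fixes no finite subset of $\overline{\mathbb{H}^2}$) modulo conjugation. Fix a free basis and the Cayley graph $\mathcal{C}$ (a tree). For a cyclically reduced word $w=w_1\cdots w_m$, its lift $\widetilde w:\mathbb{R}\to\mathcal{C}$ is the unit-speed bi-infinite path through the identity following $\cdots w_1\cdots w_mw_1\cdots w_m\cdots$. For $z\in\mathbb{H}^2$, $\tau_{\rho,z}:\mathcal{C}\to\mathbb{H}^2$ is the $\rho$-equivariant map sending vertex $v$ to $\rho(v)z$ and edges to geodesic segments. $\rho$ is simple-stable if there exist $C\ge1,\epsilon>0$ such that for every cyclically reduced $w$ representing a non-separating simple closed curve on $S_{g,n}$, $\gamma=\tau_{\rho,z}\circ\widetilde w$ satisfies $\frac1C|t-s|-\epsilon\le d(\gamma(t),\gamma(s))\le C|t-s|+\epsilon$ for all $t,s$. *)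

theory Defs
  imports "HOL-Analysis.Analysis"
begin

type_synonym letter = "nat \<times> bool"   (* (i, True) is the inverse of generator i *)
type_synonym word = "letter list"

definition inv_letter :: "letter \<Rightarrow> letter" where
  "inv_letter x = (fst x, \<not> snd x)"

definition winv :: "word \<Rightarrow> word" where
  "winv w = rev (map inv_letter w)"

fun push :: "letter \<Rightarrow> word \<Rightarrow> word" where
  "push x [] = [x]"
| "push x (y # ys) = (if y = inv_letter x then ys else x # y # ys)"

definition reduce :: "word \<Rightarrow> word" where
  "reduce w = foldr push w []"

definition reduced :: "word \<Rightarrow> bool" where
  "reduced w = (\<forall>k. Suc k < length w \<longrightarrow> w ! Suc k \<noteq> inv_letter (w ! k))"

definition cyc_reduced :: "word \<Rightarrow> bool" where
  "cyc_reduced w = (reduced w \<and> w \<noteq> [] \<and> last w \<noteq> inv_letter (hd w))"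

definition word_over :: "nat \<Rightarrow> word \<Rightarrow> bool" where
  "word_over r w = (\<forall>x\<in>set w. fst x < r)"

definition fconj :: "nat \<Rightarrow> word \<Rightarrow> word \<Rightarrow> bool" where
  "fconj r u v = (\<exists>x. word_over r x \<and> reduce (x @ u @ winv x) = reduce v)"

definition subst :: "(nat \<Rightarrow> word) \<Rightarrow> word \<Rightarrow> word" where
  "subst \<sigma> w = concat (map (\<lambda>x. if snd x then winv (\<sigma> (fst x)) else \<sigma> (fst x)) w)"

definition is_aut :: "nat \<Rightarrow> (nat \<Rightarrow> word) \<Rightarrow> bool" where
  "is_aut r \<sigma> = ((\<forall>i<r. word_over r (\<sigma> i)) \<and>
     (\<exists>\<tau>. (\<forall>i<r. word_over r (\<tau> i)) \<and>
          (\<forall>i<r. reduce (subst \<tau> (\<sigma> i)) = [(i, False)] \<and>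
                 reduce (subst \<sigma> (\<tau> i)) = [(i, False)])))"

section \<open>The surface group of S_{g,n}, n \<ge> 1, as a free group\<close>

text \<open>Free basis: a_i = generator 2i, b_i = generator 2i+1 (i<g),
  c_{j+1} = generator 2g+j (j < n-1); rank 2g+n-1.  The last puncture
  c_n = (prod [a_i,b_i] c_1 ... c_{n-1})^{-1}.\<close>

definition rk :: "nat \<Rightarrow> nat \<Rightarrow> nat" where
  "rk g n = 2 * g + n - 1"

definition comm_word :: "nat \<Rightarrow> word" where
  "comm_word i = [(2*i, False), (2*i+1, False), (2*i, True), (2*i+1, True)]"

text \<open>Peripheral element c_{j+1}, j < n.\<close>
definition periph :: "nat \<Rightarrow> nat \<Rightarrow> nat \<Rightarrow> word" where
  "periph g n j = (if j < n - 1 then [(2*g + j, False)]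
     else winv (concat (map comm_word [0..<g]) @ map (\<lambda>k. (2*g + k, False)) [0..<n-1]))"

text \<open>Automorphisms induced by (possibly orientation reversing) homeomorphisms
  of S_{g,n} (Dehn--Nielsen--Baer): automorphisms permuting the peripheral
  conjugacy classes, all with the same orientation sign.\<close>
definition mcg_aut :: "nat \<Rightarrow> nat \<Rightarrow> (nat \<Rightarrow> word) \<Rightarrow> bool" where
  "mcg_aut g n \<sigma> = (is_aut (rk g n) \<sigma> \<and>
     (\<exists>p e. bij_betw p {..<n} {..<n} \<and>
        (\<forall>j<n. fconj (rk g n) (subst \<sigma> (periph g n j))
                 (if e then winv (periph g n (p j)) else periph g n (p j)))))"

text \<open>w represents (the free homotopy class of) a non-separating simple closed
  curve: its conjugacy class, up to inversion, is in the mapping class group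
  orbit of a_1.\<close>
definition nonsep_scc :: "nat \<Rightarrow> nat \<Rightarrow> word \<Rightarrow> bool" where
  "nonsep_scc g n w = (word_over (rk g n) w \<and>
     (\<exists>\<sigma>. mcg_aut g n \<sigma> \<and> (fconj (rk g n) w (\<sigma> 0) \<or> fconj (rk g n) w (winv (\<sigma> 0)))))"

type_synonym m2 = "real^2^2"

text \<open>A representation is given by SL(2,R) lifts A i of the images of the
  generators i < r; signs are irrelevant (quotiented out below).\<close>
definition letter_mat :: "(nat \<Rightarrow> m2) \<Rightarrow> letter \<Rightarrow> m2" where
  "letter_mat A x = (if snd x then matrix_inv (A (fst x)) else A (fst x))"

definition eval :: "(nat \<Rightarrow> m2) \<Rightarrow> word \<Rightarrow> m2" where
  "eval A w = foldr (\<lambda>x M. letter_mat A x ** M) w (mat 1)"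

definition mob :: "m2 \<Rightarrow> complex \<Rightarrow> complex" where
  "mob M z = (of_real (M$1$1) * z + of_real (M$1$2)) / (of_real (M$2$1) * z + of_real (M$2$2))"

definition hdist :: "complex \<Rightarrow> complex \<Rightarrow> real" where
  "hdist z w = arcosh (1 + (cmod (z - w))\<^sup>2 / (2 * Im z * Im w))"

definition geod_pt :: "complex \<Rightarrow> complex \<Rightarrow> real \<Rightarrow> complex" where
  "geod_pt x y s = (THE p. Im p > 0 \<and> hdist x p = s * hdist x y \<and> hdist p y = (1 - s) * hdist x y)"

text \<open>Closed disc H^2 \<union> boundary: None is the point at infinity.\<close>
definition cl_pts :: "complex option set" where
  "cl_pts = insert None (Some ` {z. Im z \<ge> 0})"

definition mob_ext :: "m2 \<Rightarrow> complex option \<Rightarrow> complex option" where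
  "mob_ext M p = (case p of
      None \<Rightarrow> (if M$2$1 = 0 then None else Some (of_real (M$1$1) / of_real (M$2$1)))
    | Some z \<Rightarrow> (if of_real (M$2$1) * z + of_real (M$2$2) = 0 then None else Some (mob M z)))"

definition nonelementary :: "nat \<Rightarrow> (nat \<Rightarrow> m2) \<Rightarrow> bool" where
  "nonelementary r A = (\<not> (\<exists>F. finite F \<and> F \<noteq> {} \<and> F \<subseteq> cl_pts \<and>
       (\<forall>u. word_over r u \<longrightarrow> mob_ext (eval A u) ` F = F)))"

text \<open>Vertex at integer time k of the lift of w (through the identity at time 0),
  as a (not necessarily reduced) word.\<close>
definition vert :: "word \<Rightarrow> int \<Rightarrow> word" where
  "vert w k = (let m = int (length w); q = k div m; r = nat (k mod m) in
     (if q \<ge> 0 then concat (replicate (nat q) w) else concat (replicate (nat (- q)) (winv w)))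
     @ take r w)"

text \<open>gamma = tau_{rho,z} o (lift of w).\<close>
definition gamma :: "(nat \<Rightarrow> m2) \<Rightarrow> complex \<Rightarrow> word \<Rightarrow> real \<Rightarrow> complex" where
  "gamma A z w t = geod_pt (mob (eval A (vert w \<lfloor>t\<rfloor>)) z)
                           (mob (eval A (vert w (\<lfloor>t\<rfloor> + 1))) z) (t - of_int \<lfloor>t\<rfloor>)"

definition simple_stable :: "nat \<Rightarrow> nat \<Rightarrow> (nat \<Rightarrow> m2) \<Rightarrow> bool" where
  "simple_stable g n A = (\<exists>z. Im z > 0 \<and> (\<exists>C \<epsilon>. C \<ge> 1 \<and> \<epsilon> > 0 \<and>
     (\<forall>w. cyc_reduced w \<and> nonsep_scc g n w \<longrightarrow>
        (\<forall>t s. \<bar>t - s\<bar> / C - \<epsilon> \<le> hdist (gamma A z w t) (gamma A z w s) \<and>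
               hdist (gamma A z w t) (gamma A z w s) \<le> C * \<bar>t - s\<bar> + \<epsilon>))))"

definition rep_top :: "nat \<Rightarrow> (nat \<Rightarrow> m2) topology" where
  "rep_top r = subtopology (product_topology (\<lambda>i. euclidean) {..<r})
                           {A. \<forall>i<r. det (A i) = 1}"

definition NE :: "nat \<Rightarrow> (nat \<Rightarrow> m2) set" where
  "NE r = {A \<in> topspace (rep_top r). nonelementary r A}"

text \<open>Conjugation in PSL(2,R) (lifted to SL(2,R) with sign ambiguity).\<close>
definition conj_rel :: "nat \<Rightarrow> ((nat \<Rightarrow> m2) \<times> (nat \<Rightarrow> m2)) set" where
  "conj_rel r = {(A, B). A \<in> NE r \<and> B \<in> NE r \<and>
     (\<exists>G \<epsilon>. det G = 1 \<and> (\<forall>i<r. (\<epsilon> i = 1 \<or> \<epsilon> i = (-1::real)) \<and>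
                B i = \<epsilon> i *\<^sub>R (G ** A i ** matrix_inv G)))}"

definition Xspace :: "nat \<Rightarrow> nat \<Rightarrow> (nat \<Rightarrow> m2) set set" where
  "Xspace g n = NE (rk g n) // conj_rel (rk g n)"

definition Xtop :: "nat \<Rightarrow> nat \<Rightarrow> (nat \<Rightarrow> m2) set topology" where
  "Xtop g n = topology (\<lambda>U. U \<subseteq> Xspace g n \<and>
        openin (subtopology (rep_top (rk g n)) (NE (rk g n))) (\<Union>U))"

definition SS :: "nat \<Rightarrow> nat \<Rightarrow> (nat \<Rightarrow> m2) set set" where
  "SS g n = {conj_rel (rk g n) `` {A} | A. A \<in> NE (rk g n) \<and> simple_stable g n A}"

end

theory Submission
  imports Defs
begin


lemma m2_eq_iff: "(M::m2) = N \<longleftrightarrow> M$1$1 = N$1$1 \<and> M$1$2 = N$1$2 \<and> M$2$1 = N$2$1 \<and> M$2$2 = N$2$2"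
  by (auto simp: vec_eq_iff forall_2)

lemma m2_mult_nth [simp]: "((M::m2) ** N)$i$j = M$i$1 * N$1$j + M$i$2 * N$2$j"
  by (simp add: matrix_matrix_mult_def sum_2)

lemma mat1_nth [simp]: "(mat 1 :: m2)$1$1 = 1" "(mat 1 :: m2)$1$2 = 0" "(mat 1 :: m2)$2$1 = 0" "(mat 1 :: m2)$2$2 = 1"
  by (simp_all add: mat_def)

definition adj2 :: "m2 \<Rightarrow> m2" where
  "adj2 M = vector [vector [M$2$2, - M$1$2], vector [- M$2$1, M$1$1]]"

lemma adj2_nth [simp]: "adj2 M $1$1 = M$2$2" "adj2 M $1$2 = - M$1$2" "adj2 M $2$1 = - M$2$1" "adj2 M $2$2 = M$1$1"
  by (simp_all add: adj2_def)

lemma det2: "det (M::m2) = M$1$1 * M$2$2 - M$1$2 * M$2$1"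
  by (rule det_2)

lemma matrix_inv_eqI:
  fixes A B :: m2
  assumes "A ** B = mat 1" "B ** A = mat 1"
  shows "matrix_inv A = B"
proof -
  have "\<exists>A'. A ** A' = mat 1 \<and> A' ** A = mat 1" using assms by blast
  then have h: "A ** matrix_inv A = mat 1 \<and> matrix_inv A ** A = mat 1"
    unfolding matrix_inv_def by (rule someI_ex)
  have "matrix_inv A = matrix_inv A ** (A ** B)" using assms by simp
  also have "\<dots> = B" by (simp add: matrix_mul_assoc h)
  finally show ?thesis .
qed

lemma adj2_inv: "det M = 1 \<Longrightarrow> M ** adj2 M = mat 1" "det M = 1 \<Longrightarrow> adj2 M ** M = mat 1"
  by (auto simp: m2_eq_iff det2 algebra_simps)

lemma matrix_inv_det1: "det (M::m2) = 1 \<Longrightarrow> matrix_inv M = adj2 M"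
  by (rule matrix_inv_eqI) (auto simp: adj2_inv)

lemma det_adj2 [simp]: "det (adj2 M) = det M"
  by (simp add: det2 algebra_simps)

lemma det_mult2: "det ((M::m2) ** N) = det M * det N"
  by (rule det_mul)

lemma det_mat1 [simp]: "det (mat 1 :: m2) = 1"
  by (simp add: det2)


definition den :: "m2 \<Rightarrow> complex \<Rightarrow> complex" where
  "den M z = of_real (M$2$1) * z + of_real (M$2$2)"

lemma Re_den: "Re (den M z) = M$2$1 * Re z + M$2$2" and Im_den: "Im (den M z) = M$2$1 * Im z"
  by (simp_all add: den_def)

lemma den_nz: assumes "det M = 1" "Im z > 0" shows "den M z \<noteq> 0"
proof
  assume "den M z = 0"
  then have "M$2$1 * Im z = 0" "M$2$1 * Re z + M$2$2 = 0"
    using Re_den[of M z] Im_den[of M z] by auto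
  then have "M$2$1 = 0" "M$2$2 = 0" using assms(2) by auto
  then show False using assms(1) by (simp add: det2)
qed

lemma mob_den: "mob M z = (of_real (M$1$1) * z + of_real (M$1$2)) / den M z"
  by (simp add: mob_def den_def)

lemma Im_mob: assumes "det M = 1" "Im z > 0"
  shows "Im (mob M z) = Im z / (cmod (den M z))\<^sup>2"
proof -
  have d: "M$1$1 * M$2$2 - M$1$2 * M$2$1 = 1" using assms(1) by (simp add: det2)
  have "Im (mob M z) = (M$1$1 * Im z * (M$2$1 * Re z + M$2$2) - (M$1$1 * Re z + M$1$2) * (M$2$1 * Im z)) /
      ((Re (den M z))\<^sup>2 + (Im (den M z))\<^sup>2)"
    by (simp add: mob_den Im_divide Re_den Im_den)
  also have "M$1$1 * Im z * (M$2$1 * Re z + M$2$2) - (M$1$1 * Re z + M$1$2) * (M$2$1 * Im z)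
      = (M$1$1 * M$2$2 - M$1$2 * M$2$1) * Im z" by (simp add: algebra_simps)
  finally show ?thesis by (simp add: d cmod_power2)
qed

lemma Im_mob_pos: "det M = 1 \<Longrightarrow> Im z > 0 \<Longrightarrow> Im (mob M z) > 0"
  using den_nz[of M z] by (simp add: Im_mob)

lemma mob_diff: assumes "det M = 1" "Im z > 0" "Im w > 0"
  shows "mob M z - mob M w = (z - w) / (den M z * den M w)"
proof -
  have nz: "den M z \<noteq> 0" "den M w \<noteq> 0" using den_nz assms by auto
  have d: "complex_of_real (M$1$1) * of_real (M$2$2) - of_real (M$1$2) * of_real (M$2$1) = 1"
    using assms(1) by (simp add: det2 flip: of_real_mult of_real_diff)
  have "mob M z - mob M w = ((of_real (M$1$1) * z + of_real (M$1$2)) * den M w - (of_real (M$1$1) * w + of_real (M$1$2)) * den M z) / (den M z * den M w)"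
    using nz by (simp add: mob_den field_simps)
  also have "(of_real (M$1$1) * z + of_real (M$1$2)) * den M w - (of_real (M$1$1) * w + of_real (M$1$2)) * den M z
     = (complex_of_real (M$1$1) * of_real (M$2$2) - of_real (M$1$2) * of_real (M$2$1)) * (z - w)"
    by (simp add: den_def algebra_simps)
  finally show ?thesis by (simp add: d)
qed

lemma hdist_sym: "hdist z w = hdist w z"
  by (simp add: hdist_def norm_minus_commute mult.commute mult.left_commute)

lemma hdist_self [simp]: "hdist z z = 0"
  by (simp add: hdist_def)

lemma hdist_arg_ge1: "Im z > 0 \<Longrightarrow> Im w > 0 \<Longrightarrow> 1 \<le> 1 + (cmod (z - w))\<^sup>2 / (2 * Im z * Im w)"
  by simp

lemma hdist_nonneg: "Im z > 0 \<Longrightarrow> Im w > 0 \<Longrightarrow> hdist z w \<ge> 0"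
  by (simp add: hdist_def)

lemma cosh_hdist: "Im z > 0 \<Longrightarrow> Im w > 0 \<Longrightarrow> cosh (hdist z w) = 1 + (cmod (z - w))\<^sup>2 / (2 * Im z * Im w)"
  unfolding hdist_def by (rule cosh_arcosh_real) simp

lemma hdist_eq0: "Im z > 0 \<Longrightarrow> Im w > 0 \<Longrightarrow> hdist z w = 0 \<longleftrightarrow> z = w"
  unfolding hdist_def by (subst arcosh_eq_0_iff_real) auto

lemma hdist_mob: assumes "det M = 1" "Im z > 0" "Im w > 0"
  shows "hdist (mob M z) (mob M w) = hdist z w"
proof -
  have nz: "den M z \<noteq> 0" "den M w \<noteq> 0" using den_nz assms by auto
  have "(cmod (mob M z - mob M w))\<^sup>2 / (2 * Im (mob M z) * Im (mob M w)) = (cmod (z - w))\<^sup>2 / (2 * Im z * Im w)"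
    using nz assms by (simp add: mob_diff Im_mob norm_divide norm_mult power_divide power_mult_distrib field_simps)
  then show ?thesis by (simp add: hdist_def)
qed

lemma mob_mult: assumes "det N = 1" "Im z > 0"
  shows "mob (M ** N) z = mob M (mob N z)"
proof -
  have nz: "den N z \<noteq> 0" using den_nz assms by auto
  define u where "u = of_real (N$1$1) * z + of_real (N$1$2)"
  define v where "v = den N z"
  have w: "mob N z = u / v" by (simp add: mob_den u_def v_def)
  have e1: "of_real (M$1$1) * (u/v) + of_real (M$1$2) = (of_real (M$1$1) * u + of_real (M$1$2) * v) / v"
    using nz by (simp add: v_def field_simps)
  have e2: "of_real (M$2$1) * (u/v) + of_real (M$2$2) = (of_real (M$2$1) * u + of_real (M$2$2) * v) / v"
    using nz by (simp add: v_def field_simps)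
  have "mob M (mob N z) = (of_real (M$1$1) * u + of_real (M$1$2) * v) / (of_real (M$2$1) * u + of_real (M$2$2) * v)"
  proof -
    have "mob M (u/v) = ((of_real (M$1$1) * u + of_real (M$1$2) * v) / v) / ((of_real (M$2$1) * u + of_real (M$2$2) * v) / v)"
      by (simp only: mob_def e1 e2)
    then show ?thesis using nz by (simp add: w v_def)
  qed
  also have "\<dots> = mob (M ** N) z"
    by (simp add: mob_def u_def v_def den_def algebra_simps)
  finally show ?thesis by simp
qed

lemma mob_mat1 [simp]: "mob (mat 1) z = z"
  by (simp add: mob_def)

lemma mob_adj2: "det M = 1 \<Longrightarrow> Im z > 0 \<Longrightarrow> mob (adj2 M) (mob M z) = z"
  by (metis adj2_inv(2) mob_mat1 mob_mult)

lemma mob_adj2': "det M = 1 \<Longrightarrow> Im z > 0 \<Longrightarrow> mob M (mob (adj2 M) z) = z"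
  by (metis adj2_inv(1) det_adj2 mob_mat1 mob_mult)

lemma mob_scale: "c \<noteq> 0 \<Longrightarrow> mob (c *\<^sub>R M) z = mob M z"
proof -
  assume c: "c \<noteq> 0"
  have "mob (c *\<^sub>R M) z = (of_real c * (of_real (M$1$1) * z + of_real (M$1$2))) / (of_real c * (of_real (M$2$1) * z + of_real (M$2$2)))"
    by (simp add: mob_def algebra_simps)
  also have "\<dots> = mob M z" using c by (simp add: mob_def)
  finally show ?thesis .
qed


definition HT :: "complex \<Rightarrow> real" where "HT z = (1 + (Re z)\<^sup>2 + (Im z)\<^sup>2) / (2 * Im z)"
definition HP1 :: "complex \<Rightarrow> real" where "HP1 z = Re z / Im z"
definition HP2 :: "complex \<Rightarrow> real" where "HP2 z = ((Re z)\<^sup>2 + (Im z)\<^sup>2 - 1) / (2 * Im z)"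

lemma cosh_hdist_hyp_aux: "b > 0 \<Longrightarrow> d > 0 \<Longrightarrow> 1 + ((a - c)\<^sup>2 + (b - d)\<^sup>2) / (2 * b * d) =
   (1 + a\<^sup>2 + b\<^sup>2) / (2 * b) * ((1 + c\<^sup>2 + d\<^sup>2) / (2 * d)) - a / b * (c / d) -
   (a\<^sup>2 + b\<^sup>2 - 1) / (2 * b) * ((c\<^sup>2 + d\<^sup>2 - 1) / (2 * d))"
  for a b c d :: real
  by (simp add: field_simps) (simp add: algebra_simps power2_eq_square)

lemma cosh_hdist_hyp: assumes "Im z > 0" "Im w > 0"
  shows "cosh (hdist z w) = HT z * HT w - HP1 z * HP1 w - HP2 z * HP2 w"
proof -
  have "(cmod (z - w))\<^sup>2 = (Re z - Re w)\<^sup>2 + (Im z - Im w)\<^sup>2" by (simp add: cmod_power2)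
  then show ?thesis using assms cosh_hdist_hyp_aux[of "Im z" "Im w" "Re z" "Re w"]
    by (simp add: cosh_hdist HT_def HP1_def HP2_def)
qed

lemma hyp_norm: "Im z > 0 \<Longrightarrow> (HT z)\<^sup>2 = 1 + (HP1 z)\<^sup>2 + (HP2 z)\<^sup>2"
  by (simp add: HT_def HP1_def HP2_def field_simps power2_eq_square)

lemma HT_pos: "Im z > 0 \<Longrightarrow> HT z > 0"
  by (simp add: HT_def add_pos_nonneg)

lemma HT_i [simp]: "HT \<i> = 1" and HP1_i [simp]: "HP1 \<i> = 0" and HP2_i [simp]: "HP2 \<i> = 0"
  by (simp_all add: HT_def HP1_def HP2_def)

lemma cosh_hdist_i: "Im w > 0 \<Longrightarrow> cosh (hdist \<i> w) = HT w"
  using cosh_hdist_hyp[of \<i> w] by simp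

lemma sinh_hdist_i: assumes "Im w > 0" shows "sinh (hdist \<i> w) = sqrt ((HP1 w)\<^sup>2 + (HP2 w)\<^sup>2)"
proof -
  have "(sinh (hdist \<i> w))\<^sup>2 = (HT w)\<^sup>2 - 1" using cosh_square_eq[of "hdist \<i> w"] cosh_hdist_i[OF assms] by simp
  also have "\<dots> = (HP1 w)\<^sup>2 + (HP2 w)\<^sup>2" using hyp_norm[OF assms] by simp
  finally have e: "(sinh (hdist \<i> w))\<^sup>2 = (HP1 w)\<^sup>2 + (HP2 w)\<^sup>2" .
  have "sinh (hdist \<i> w) \<ge> 0" using hdist_nonneg[of \<i> w] assms by simp
  then show ?thesis using e by (metis real_sqrt_unique)
qed

lemma CS2: "\<bar>a*c + b*d\<bar> \<le> sqrt (a\<^sup>2 + b\<^sup>2) * sqrt (c\<^sup>2 + d\<^sup>2)"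
proof -
  have "(a*c + b*d)\<^sup>2 \<le> (a\<^sup>2 + b\<^sup>2) * (c\<^sup>2 + d\<^sup>2)"
  proof -
    have "(a\<^sup>2 + b\<^sup>2) * (c\<^sup>2 + d\<^sup>2) - (a*c + b*d)\<^sup>2 = (a*d - b*c)\<^sup>2" by (simp add: algebra_simps power2_eq_square)
    then show ?thesis by (metis diff_ge_0_iff_ge zero_le_power2)
  qed
  then have "sqrt ((a*c + b*d)\<^sup>2) \<le> sqrt ((a\<^sup>2 + b\<^sup>2) * (c\<^sup>2 + d\<^sup>2))" by (rule real_sqrt_le_mono)
  then show ?thesis by (simp add: real_sqrt_mult)
qed

lemma tri_i: assumes "Im x > 0" "Im z > 0"
  shows "hdist x z \<le> hdist \<i> x + hdist \<i> z"
proof -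
  have "cosh (hdist x z) = HT x * HT z - (HP1 x * HP1 z + HP2 x * HP2 z)"
    using cosh_hdist_hyp[OF assms] by simp
  also have "\<dots> \<le> HT x * HT z + sqrt ((HP1 x)\<^sup>2 + (HP2 x)\<^sup>2) * sqrt ((HP1 z)\<^sup>2 + (HP2 z)\<^sup>2)"
    using CS2[of "HP1 x" "HP1 z" "HP2 x" "HP2 z"] by linarith
  also have "\<dots> = cosh (hdist \<i> x + hdist \<i> z)"
    by (simp add: cosh_add cosh_hdist_i sinh_hdist_i assms)
  finally show ?thesis
    using cosh_real_nonneg_le_iff[of "hdist x z" "hdist \<i> x + hdist \<i> z"] hdist_nonneg assms
    by (simp add: add_nonneg_nonneg)
qed

definition stdm :: "complex \<Rightarrow> m2" where
  "stdm y = vector [vector [1 / sqrt (Im y), - Re y / sqrt (Im y)], vector [0, sqrt (Im y)]]"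

lemma stdm_nth [simp]: "stdm y $1$1 = 1 / sqrt (Im y)" "stdm y $1$2 = - Re y / sqrt (Im y)"
   "stdm y $2$1 = 0" "stdm y $2$2 = sqrt (Im y)"
  by (simp_all add: stdm_def)

lemma det_stdm: "Im y > 0 \<Longrightarrow> det (stdm y) = 1"
  by (simp add: det2)

lemma mob_stdm: assumes "Im y > 0" shows "mob (stdm y) y = \<i>"
proof -
  have s: "sqrt (Im y) > 0" "sqrt (Im y) * sqrt (Im y) = Im y" using assms by auto
  have "mob (stdm y) y = (of_real (1 / sqrt (Im y)) * y - of_real (Re y / sqrt (Im y))) / of_real (sqrt (Im y))"
    by (simp add: mob_def)
  also have "\<dots> = (y - of_real (Re y)) / (of_real (sqrt (Im y)) * of_real (sqrt (Im y)))"
    using s by (simp add: field_simps)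
  also have "\<dots> = (y - of_real (Re y)) / of_real (Im y)" using s by (simp flip: of_real_mult)
  also have "y - of_real (Re y) = \<i> * of_real (Im y)" by (simp add: complex_eq_iff)
  finally show ?thesis using assms by simp
qed

lemma hdist_triangle: assumes "Im x > 0" "Im y > 0" "Im z > 0"
  shows "hdist x z \<le> hdist x y + hdist y z"
proof -
  let ?M = "stdm y"
  have d: "det ?M = 1" using det_stdm assms by simp
  have "hdist x z = hdist (mob ?M x) (mob ?M z)" using hdist_mob[OF d] assms by simp
  also have "\<dots> \<le> hdist \<i> (mob ?M x) + hdist \<i> (mob ?M z)"
    by (rule tri_i) (use Im_mob_pos[OF d] assms in auto)
  also have "\<dots> = hdist y x + hdist y z"
    using hdist_mob[OF d] mob_stdm assms by metis
  finally show ?thesis by (simp add: hdist_sym)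
qed


lemma HT_minus_HP2: "Im z > 0 \<Longrightarrow> HT z - HP2 z = 1 / Im z"
  by (simp add: HT_def HP2_def field_simps)

lemma HP1_Im: "Im z > 0 \<Longrightarrow> HP1 z * Im z = Re z"
  by (simp add: HP1_def)

lemma hyp_inj: assumes "Im p > 0" "Im q > 0" "HT p = HT q" "HP1 p = HP1 q" "HP2 p = HP2 q"
  shows "p = q"
proof -
  have "1 / Im p = 1 / Im q" using HT_minus_HP2 assms by metis
  then have i: "Im p = Im q" by simp
  have "Re p = Re q" using HP1_Im[OF assms(1)] HP1_Im[OF assms(2)] assms(4) i by metis
  with i show ?thesis by (simp add: complex_eq_iff)
qed

lemma hdist_from_cosh: "Im p > 0 \<Longrightarrow> Im q > 0 \<Longrightarrow> a \<ge> 0 \<Longrightarrow> cosh (hdist p q) = cosh a \<Longrightarrow> hdist p q = a"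
  using hdist_nonneg[of p q] cosh_real_eq_iff by (metis abs_of_nonneg)

lemma HT_aux: "k > 0 \<Longrightarrow> (1 + (a/k)\<^sup>2 + (1/k)\<^sup>2) / (2 * (1/k)) = (k\<^sup>2 + a\<^sup>2 + 1) / (2 * k)" for a k :: real
  by (simp add: field_simps power2_eq_square)
lemma HP2_aux: "k > 0 \<Longrightarrow> ((a/k)\<^sup>2 + (1/k)\<^sup>2 - 1) / (2 * (1/k)) = (a\<^sup>2 + 1 - k\<^sup>2) / (2 * k)" for a k :: real
  by (simp add: field_simps power2_eq_square)

lemma geo_i_ex: assumes y: "Im y > 0" and s: "0 \<le> s" "s \<le> 1"
  shows "\<exists>p. Im p > 0 \<and> hdist \<i> p = s * hdist \<i> y \<and> hdist p y = (1 - s) * hdist \<i> y"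
proof (cases "hdist \<i> y = 0")
  case True
  then show ?thesis by (intro exI[of _ \<i>]) simp
next
  case False
  define D where "D = hdist \<i> y"
  have D: "D > 0" using False hdist_nonneg[of \<i> y] y by (simp add: D_def)
  have sD: "s * D \<ge> 0" using s D by simp
  define T where "T = cosh (s * D)"
  define l where "l = sinh (s * D) / sinh D"
  define Q1 where "Q1 = l * HP1 y"
  define Q2 where "Q2 = l * HP2 y"
  have shD: "sinh D > 0" using D by simp
  have nP: "(HP1 y)\<^sup>2 + (HP2 y)\<^sup>2 = (sinh D)\<^sup>2"
    using sinh_hdist_i[OF y] by (simp add: D_def)
  have nQ: "Q1\<^sup>2 + Q2\<^sup>2 = (sinh (s*D))\<^sup>2"
  proof -
    have "Q1\<^sup>2 + Q2\<^sup>2 = l\<^sup>2 * ((HP1 y)\<^sup>2 + (HP2 y)\<^sup>2)" by (simp add: Q1_def Q2_def power_mult_distrib algebra_simps)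
    also have "\<dots> = (sinh (s*D))\<^sup>2" using nP shD by (simp add: l_def power_divide)
    finally show ?thesis .
  qed
  have T2: "T\<^sup>2 = 1 + Q1\<^sup>2 + Q2\<^sup>2" using nQ cosh_square_eq[of "s*D"] by (simp add: T_def)
  have Tpos: "T > 0" by (simp add: T_def)
  have "Q2 < T"
  proof -
    have "Q2\<^sup>2 < T\<^sup>2" using T2 by (simp add: add_pos_nonneg)
    then have "\<bar>Q2\<bar> < \<bar>T\<bar>" using abs_less_iff power2_less_imp_less by (metis abs_ge_zero power2_abs)
    then show ?thesis using Tpos by linarith
  qed
  then have tq: "T - Q2 > 0" by simp
  define p where "p = Complex (Q1 / (T - Q2)) (1 / (T - Q2))"
  have pim: "Im p > 0" using tq by (simp add: p_def)
  have HTp: "HT p = T"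
  proof -
    have "HT p = (1 + (Q1/(T - Q2))\<^sup>2 + (1/(T - Q2))\<^sup>2) / (2 * (1/(T - Q2)))"
      unfolding p_def HT_def by simp
    also have "\<dots> = ((T - Q2)\<^sup>2 + Q1\<^sup>2 + 1) / (2 * (T - Q2))" by (rule HT_aux[OF tq])
    also have "(T - Q2)\<^sup>2 + Q1\<^sup>2 + 1 = 2 * T * (T - Q2)" using T2 by (simp add: power2_eq_square algebra_simps)
    also have "2 * T * (T - Q2) / (2 * (T - Q2)) = T" using tq by (simp add: field_simps)
    finally show ?thesis .
  qed
  have HP1p: "HP1 p = Q1" using tq by (simp add: p_def HP1_def)
  have HP2p: "HP2 p = Q2"
  proof -
    have "HP2 p = ((Q1/(T - Q2))\<^sup>2 + (1/(T - Q2))\<^sup>2 - 1) / (2 * (1/(T - Q2)))"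
      unfolding p_def HP2_def by simp
    also have "\<dots> = (Q1\<^sup>2 + 1 - (T - Q2)\<^sup>2) / (2 * (T - Q2))" by (rule HP2_aux[OF tq])
    also have "Q1\<^sup>2 + 1 - (T - Q2)\<^sup>2 = 2 * Q2 * (T - Q2)" using T2 by (simp add: power2_eq_square algebra_simps)
    also have "2 * Q2 * (T - Q2) / (2 * (T - Q2)) = Q2" using tq by (simp add: field_simps)
    finally show ?thesis .
  qed
  have d1: "hdist \<i> p = s * D"
    by (rule hdist_from_cosh) (use pim sD HTp cosh_hdist_i T_def in auto)
  have "cosh (hdist p y) = T * cosh D - l * ((HP1 y)\<^sup>2 + (HP2 y)\<^sup>2)"
    using cosh_hdist_hyp[OF pim y] HTp HP1p HP2p cosh_hdist_i[OF y]
    by (simp add: D_def Q1_def Q2_def power2_eq_square algebra_simps)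
  also have "\<dots> = cosh (s*D) * cosh D - sinh (s*D) * sinh D"
    using nP shD by (simp add: T_def l_def power2_eq_square)
  also have "\<dots> = cosh ((1 - s) * D)"
    using cosh_diff[of D "s*D"] by (simp add: algebra_simps)
  finally have d2: "hdist p y = (1 - s) * D"
    by (intro hdist_from_cosh) (use pim y s D in auto)
  show ?thesis using pim d1 d2 by (auto simp: D_def)
qed

lemma geo_i_uniq: assumes y: "Im y > 0" and s: "0 \<le> s" "s \<le> 1"
  and p: "Im p > 0" "hdist \<i> p = s * hdist \<i> y" "hdist p y = (1 - s) * hdist \<i> y"
  and q: "Im q > 0" "hdist \<i> q = s * hdist \<i> y" "hdist q y = (1 - s) * hdist \<i> y"
  shows "p = q"
proof (cases "hdist \<i> y = 0")
  case True
  then have "p = \<i>" "q = \<i>" using p q hdist_eq0[of \<i>] by auto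
  then show ?thesis by simp
next
  case False
  define D where "D = hdist \<i> y"
  have D: "D > 0" using False hdist_nonneg[of \<i> y] y by (simp add: D_def)
  define l where "l = sinh (s * D) / sinh D"
  have shD: "sinh D > 0" using D by simp
  have nP: "(HP1 y)\<^sup>2 + (HP2 y)\<^sup>2 = (sinh D)\<^sup>2"
    using sinh_hdist_i[OF y] by (simp add: D_def)
  have key: "HT u = cosh (s*D) \<and> HP1 u = l * HP1 y \<and> HP2 u = l * HP2 y"
    if u: "Im u > 0" "hdist \<i> u = s * D" "hdist u y = (1 - s) * D" for u
  proof -
    have T: "HT u = cosh (s*D)" using cosh_hdist_i[OF u(1)] u(2) by simp
    have nu: "(HP1 u)\<^sup>2 + (HP2 u)\<^sup>2 = (sinh (s*D))\<^sup>2"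
      using sinh_hdist_i[OF u(1)] u(2) by (metis real_sqrt_pow2 add_nonneg_nonneg zero_le_power2)
    have "cosh ((1-s)*D) = HT u * HT y - (HP1 u * HP1 y + HP2 u * HP2 y)"
      using cosh_hdist_hyp[OF u(1) y] u(3) by simp
    moreover have "cosh ((1-s)*D) = cosh D * cosh (s*D) - sinh D * sinh (s*D)"
      using cosh_diff[of D "s*D"] by (simp add: algebra_simps)
    moreover have "HT y = cosh D" using cosh_hdist_i[OF y] by (simp add: D_def)
    ultimately have dot: "HP1 u * HP1 y + HP2 u * HP2 y = sinh D * sinh (s*D)" using T by simp
    have "(HP1 u - l * HP1 y)\<^sup>2 + (HP2 u - l * HP2 y)\<^sup>2 =
          ((HP1 u)\<^sup>2 + (HP2 u)\<^sup>2) - 2 * l * (HP1 u * HP1 y + HP2 u * HP2 y) + l\<^sup>2 * ((HP1 y)\<^sup>2 + (HP2 y)\<^sup>2)"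
      by (simp add: power2_eq_square algebra_simps)
    also have "\<dots> = 0" using nu dot nP shD by (simp add: l_def power2_eq_square field_simps)
    finally have "(HP1 u - l * HP1 y)\<^sup>2 + (HP2 u - l * HP2 y)\<^sup>2 = 0" .
    then have "HP1 u - l * HP1 y = 0" "HP2 u - l * HP2 y = 0"
      by (simp_all add: add_nonneg_eq_0_iff)
    with T show ?thesis by simp
  qed
  have "HT p = HT q \<and> HP1 p = HP1 q \<and> HP2 p = HP2 q"
    using key[of p] key[of q] p q by (simp add: D_def)
  then show ?thesis using hyp_inj p(1) q(1) by blast
qed

lemma geo_ex1: assumes x: "Im x > 0" and y: "Im y > 0" and s: "0 \<le> s" "s \<le> 1"
  shows "\<exists>!p. Im p > 0 \<and> hdist x p = s * hdist x y \<and> hdist p y = (1 - s) * hdist x y"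
proof -
  let ?M = "stdm x"
  have dM: "det ?M = 1" using det_stdm x by simp
  have dA: "det (adj2 ?M) = 1" using dM by simp
  have Mx: "mob ?M x = \<i>" using mob_stdm x by simp
  have My: "Im (mob ?M y) > 0" using Im_mob_pos dM y by simp
  have hxy: "hdist \<i> (mob ?M y) = hdist x y" using hdist_mob[OF dM x y] Mx by simp
  obtain p0 where p0: "Im p0 > 0" "hdist \<i> p0 = s * hdist \<i> (mob ?M y)" "hdist p0 (mob ?M y) = (1 - s) * hdist \<i> (mob ?M y)"
    using geo_i_ex[OF My s] by blast
  define p where "p = mob (adj2 ?M) p0"
  have pim: "Im p > 0" using Im_mob_pos[OF dA p0(1)] by (simp add: p_def)
  have Mp: "mob ?M p = p0" using mob_adj2'[OF dM p0(1)] by (simp add: p_def)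
  have trans: "hdist x u = hdist \<i> (mob ?M u) \<and> hdist u y = hdist (mob ?M u) (mob ?M y)" if "Im u > 0" for u
    using hdist_mob[OF dM x that] hdist_mob[OF dM that y] Mx by simp
  show ?thesis
  proof (rule ex1I[of _ p])
    show "Im p > 0 \<and> hdist x p = s * hdist x y \<and> hdist p y = (1 - s) * hdist x y"
      using trans[OF pim] Mp p0 pim hxy by simp
  next
    fix q assume q: "Im q > 0 \<and> hdist x q = s * hdist x y \<and> hdist q y = (1 - s) * hdist x y"
    have qim: "Im (mob ?M q) > 0" using Im_mob_pos dM q by simp
    have "mob ?M q = p0"
      by (rule geo_i_uniq[OF My s _ _ _ p0]) (use qim trans[of q] q hxy in auto)
    then show "q = p" using mob_adj2[OF dM, of q] q by (simp add: p_def)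
  qed
qed

lemma geod_pt_spec: assumes "Im x > 0" "Im y > 0" "0 \<le> s" "s \<le> 1"
  shows "Im (geod_pt x y s) > 0 \<and> hdist x (geod_pt x y s) = s * hdist x y \<and> hdist (geod_pt x y s) y = (1 - s) * hdist x y"
  unfolding geod_pt_def by (rule theI') (rule geo_ex1[OF assms])

lemma geod_pt_mob: assumes G: "det G = 1" and x: "Im x > 0" and y: "Im y > 0" and s: "0 \<le> s" "s \<le> 1"
  shows "geod_pt (mob G x) (mob G y) s = mob G (geod_pt x y s)"
proof -
  have gx: "Im (mob G x) > 0" "Im (mob G y) > 0" using Im_mob_pos G x y by auto
  obtain h: "Im (geod_pt x y s) > 0" "hdist x (geod_pt x y s) = s * hdist x y" "hdist (geod_pt x y s) y = (1 - s) * hdist x y"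
    using geod_pt_spec[OF x y s] by blast
  show ?thesis unfolding geod_pt_def[of "mob G x" "mob G y" s]
  proof (rule the1_equality[OF geo_ex1[OF gx s]])
    show "Im (mob G (geod_pt x y s)) > 0 \<and> hdist (mob G x) (mob G (geod_pt x y s)) = s * hdist (mob G x) (mob G y) \<and>
       hdist (mob G (geod_pt x y s)) (mob G y) = (1 - s) * hdist (mob G x) (mob G y)"
      using Im_mob_pos[OF G h(1)] hdist_mob[OF G] h x y by simp
  qed
qed

lemma geod_pt_0: "Im x > 0 \<Longrightarrow> Im y > 0 \<Longrightarrow> geod_pt x y 0 = x"
  using geod_pt_spec[of x y 0] hdist_eq0[of x "geod_pt x y 0"] by simp


definition gp :: "complex \<Rightarrow> complex \<Rightarrow> complex \<Rightarrow> real" where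
  "gp p x y = (hdist p x + hdist p y - hdist x y) / 2"

lemma gp_mob: assumes "det G = 1" "Im p > 0" "Im x > 0" "Im y > 0"
  shows "gp (mob G p) (mob G x) (mob G y) = gp p x y"
  using hdist_mob[OF assms(1)] assms by (simp add: gp_def)

lemma exp_le_2cosh: "exp u \<le> 2 * cosh (u::real)"
  using cosh_plus_sinh[of u] sinh_le_cosh_real[of u] by linarith

lemma cosh_le_exp: "(u::real) \<ge> 0 \<Longrightarrow> cosh u \<le> exp u"
  using cosh_plus_sinh[of u] sinh_real_nonneg_iff[of u] by linarith

definition Qf :: "complex \<Rightarrow> complex \<Rightarrow> real" where
  "Qf u v = cosh (hdist u v) / (HT u * HT v)"

lemma Qf_form: assumes "Im u > 0" "Im v > 0"
  shows "Qf u v = 1 - ((HP1 u / HT u) * (HP1 v / HT v) + (HP2 u / HT u) * (HP2 v / HT v))"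
  using HT_pos[OF assms(1)] HT_pos[OF assms(2)]
  by (simp add: Qf_def cosh_hdist_hyp[OF assms] field_simps)

lemma unit_ball: assumes "Im u > 0" shows "(HP1 u / HT u)\<^sup>2 + (HP2 u / HT u)\<^sup>2 \<le> 1"
proof -
  have h: "HT u > 0" using HT_pos assms by simp
  have "(HP1 u / HT u)\<^sup>2 + (HP2 u / HT u)\<^sup>2 = ((HP1 u)\<^sup>2 + (HP2 u)\<^sup>2) / (HT u)\<^sup>2"
    by (simp add: power_divide add_divide_distrib)
  also have "\<dots> = ((HT u)\<^sup>2 - 1) / (HT u)\<^sup>2" using hyp_norm[OF assms] by simp
  also have "\<dots> \<le> 1" using h by (simp add: divide_le_eq_1)
  finally show ?thesis .
qed

lemma Qineq:
  fixes a1 a2 b1 b2 c1 c2 :: real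
  assumes "a1\<^sup>2 + a2\<^sup>2 \<le> 1" "b1\<^sup>2 + b2\<^sup>2 \<le> 1" "c1\<^sup>2 + c2\<^sup>2 \<le> 1"
  shows "1 - (a1*b1 + a2*b2) \<le> 3 * ((1 - (a1*c1 + a2*c2)) + (1 - (c1*b1 + c2*b2)))"
proof -
  have e: "6 * (1 - (a1*c1 + a2*c2)) + 6 * (1 - (c1*b1 + c2*b2)) - 2 * (1 - (a1*b1 + a2*b2)) =
    ((a1 - c1)\<^sup>2 + (a2 - c2)\<^sup>2) + ((c1 - b1)\<^sup>2 + (c2 - b2)\<^sup>2) + ((a1 - 2*c1 + b1)\<^sup>2 + (a2 - 2*c2 + b2)\<^sup>2)
     + 2 * (1 - (a1\<^sup>2 + a2\<^sup>2)) + 2 * (1 - (b1\<^sup>2 + b2\<^sup>2)) + 6 * (1 - (c1\<^sup>2 + c2\<^sup>2))"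
    by (simp add: power2_eq_square algebra_simps)
  have "0 \<le> ((a1 - c1)\<^sup>2 + (a2 - c2)\<^sup>2) + ((c1 - b1)\<^sup>2 + (c2 - b2)\<^sup>2) + ((a1 - 2*c1 + b1)\<^sup>2 + (a2 - 2*c2 + b2)\<^sup>2)
     + 2 * (1 - (a1\<^sup>2 + a2\<^sup>2)) + 2 * (1 - (b1\<^sup>2 + b2\<^sup>2)) + 6 * (1 - (c1\<^sup>2 + c2\<^sup>2))"
    using assms by (intro add_nonneg_nonneg) auto
  then have "0 \<le> 6 * (1 - (a1*c1 + a2*c2)) + 6 * (1 - (c1*b1 + c2*b2)) - 2 * (1 - (a1*b1 + a2*b2))"
    by (simp only: e)
  then show ?thesis by (simp add: algebra_simps)
qed

lemma Q_tri: assumes "Im x > 0" "Im y > 0" "Im z > 0"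
  shows "Qf x y \<le> 3 * (Qf x z + Qf z y)"
  using Qineq[OF unit_ball[OF assms(1)] unit_ball[OF assms(2)] unit_ball[OF assms(3)]]
  by (simp add: Qf_form assms)

lemma E_upper: assumes "Im u > 0" "Im v > 0"
  shows "exp (hdist u v - hdist \<i> u - hdist \<i> v) \<le> 2 * Qf u v"
proof -
  have "exp (hdist u v - hdist \<i> u - hdist \<i> v) = exp (hdist u v) / (exp (hdist \<i> u) * exp (hdist \<i> v))"
    by (simp add: exp_diff)
  also have "\<dots> \<le> 2 * cosh (hdist u v) / (cosh (hdist \<i> u) * cosh (hdist \<i> v))"
  proof (rule frac_le)
    show "0 \<le> 2 * cosh (hdist u v)" by simp
    show "exp (hdist u v) \<le> 2 * cosh (hdist u v)" by (rule exp_le_2cosh)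
    show "0 < cosh (hdist \<i> u) * cosh (hdist \<i> v)" by simp
    show "cosh (hdist \<i> u) * cosh (hdist \<i> v) \<le> exp (hdist \<i> u) * exp (hdist \<i> v)"
      by (intro mult_mono cosh_le_exp hdist_nonneg) (use assms in auto)
  qed
  also have "\<dots> = 2 * Qf u v" by (simp add: Qf_def cosh_hdist_i assms)
  finally show ?thesis .
qed

lemma E_lower: assumes "Im u > 0" "Im v > 0"
  shows "Qf u v \<le> 4 * exp (hdist u v - hdist \<i> u - hdist \<i> v)"
proof -
  have "Qf u v = cosh (hdist u v) / (cosh (hdist \<i> u) * cosh (hdist \<i> v))"
    by (simp add: Qf_def cosh_hdist_i assms)
  also have "\<dots> \<le> exp (hdist u v) / ((exp (hdist \<i> u) / 2) * (exp (hdist \<i> v) / 2))"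
  proof (rule frac_le)
    show "0 \<le> exp (hdist u v)" by simp
    show "cosh (hdist u v) \<le> exp (hdist u v)" by (rule cosh_le_exp) (use hdist_nonneg assms in auto)
    show "0 < exp (hdist \<i> u) / 2 * (exp (hdist \<i> v) / 2)" by simp
    show "exp (hdist \<i> u) / 2 * (exp (hdist \<i> v) / 2) \<le> cosh (hdist \<i> u) * cosh (hdist \<i> v)"
      by (intro mult_mono) (use exp_le_2cosh[of "hdist \<i> u"] exp_le_2cosh[of "hdist \<i> v"] in auto)
  qed
  also have "\<dots> = 4 * exp (hdist u v - hdist \<i> u - hdist \<i> v)"
    by (simp add: exp_diff)
  finally show ?thesis .
qed

definition hdelta :: real where "hdelta = ln 48 / 2"

lemma hdelta_nonneg: "hdelta \<ge> 0"
  by (simp add: hdelta_def)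

lemma four_i: assumes x: "Im x > 0" and y: "Im y > 0" and z: "Im z > 0"
  shows "gp \<i> x y \<ge> min (gp \<i> x z) (gp \<i> z y) - hdelta"
proof -
  have ex: "exp (-2 * gp \<i> u v) = exp (hdist u v - hdist \<i> u - hdist \<i> v)" for u v
  proof -
    have "-2 * gp \<i> u v = hdist u v - hdist \<i> u - hdist \<i> v" unfolding gp_def by (simp add: field_simps)
    then show ?thesis by simp
  qed
  let ?m = "min (gp \<i> x z) (gp \<i> z y)"
  have "exp (-2 * gp \<i> x y) \<le> 2 * Qf x y" using E_upper[OF x y] ex by simp
  also have "\<dots> \<le> 6 * (Qf x z + Qf z y)" using Q_tri[OF x y z] by simp
  also have "\<dots> \<le> 24 * (exp (-2 * gp \<i> x z) + exp (-2 * gp \<i> z y))"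
    using E_lower[OF x z] E_lower[OF z y] ex by simp
  also have "\<dots> \<le> 24 * (exp (-2 * ?m) + exp (-2 * ?m))"
    by (intro mult_left_mono add_mono) auto
  also have "\<dots> = 48 * exp (-2 * ?m)" by simp
  also have "\<dots> = exp (ln 48 - 2 * ?m)" by (simp add: exp_diff exp_minus field_simps)
  finally have "-2 * gp \<i> x y \<le> ln 48 - 2 * ?m" by simp
  then show ?thesis by (simp add: hdelta_def)
qed

lemma four: assumes p: "Im p > 0" and x: "Im x > 0" and y: "Im y > 0" and z: "Im z > 0"
  shows "gp p x y \<ge> min (gp p x z) (gp p z y) - hdelta"
proof -
  let ?M = "stdm p"
  have d: "det ?M = 1" using det_stdm p by simp
  have "gp \<i> (mob ?M x) (mob ?M y) \<ge> min (gp \<i> (mob ?M x) (mob ?M z)) (gp \<i> (mob ?M z) (mob ?M y)) - hdelta"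
    by (rule four_i) (use Im_mob_pos[OF d] x y z in auto)
  then show ?thesis using gp_mob[OF d p] mob_stdm[OF p] x y z by metis
qed


lemma gp_sym: "gp p x y = gp p y x"
  by (simp add: gp_def hdist_sym add.commute)

lemma gp_le_dist: "Im p > 0 \<Longrightarrow> Im x > 0 \<Longrightarrow> Im y > 0 \<Longrightarrow> gp p x y \<le> hdist p x"
  using hdist_triangle[of p x y] by (simp add: gp_def)

lemma gp_ge_step: "Im p > 0 \<Longrightarrow> Im x > 0 \<Longrightarrow> Im y > 0 \<Longrightarrow> gp p x y \<ge> hdist p x - hdist x y"
  using hdist_triangle[of p y x] by (simp add: gp_def hdist_sym)

lemma gp_nonneg: "Im p > 0 \<Longrightarrow> Im x > 0 \<Longrightarrow> Im y > 0 \<Longrightarrow> gp p x y \<ge> 0"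
  using hdist_triangle[of x p y] by (simp add: gp_def hdist_sym)

lemma gp_swap: "gp q p x + gp p q x = hdist p q"
  by (simp add: gp_def hdist_sym field_simps)

lemma dist_gp: "hdist x y = hdist p x + hdist p y - 2 * gp p x y"
  by (simp add: gp_def field_simps)

lemma log_chain:
  assumes "\<forall>k\<le>N. Im (y k) > 0" "Im p > 0" "\<forall>k\<le>N. hdist p (y k) \<ge> R"
    "\<forall>k<N. hdist (y k) (y (Suc k)) \<le> S" "S \<ge> 0" "N \<le> 2^h"
  shows "gp p (y 0) (y N) \<ge> R - S - real h * hdelta"
  using assms
proof (induction h arbitrary: y N)
  case 0
  then have "N = 0 \<or> N = 1" by auto
  then show ?case
  proof
    assume "N = 0"
    then show ?thesis using 0 by (simp add: gp_def)
  next
    assume N: "N = 1"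
    have "gp p (y 0) (y 1) \<ge> hdist p (y 0) - hdist (y 0) (y 1)"
      by (rule gp_ge_step) (use 0 N in auto)
    moreover have "hdist p (y 0) \<ge> R" "hdist (y 0) (y 1) \<le> S" using 0 N by auto
    ultimately show ?thesis using N by simp
  qed
next
  case (Suc h)
  show ?case
  proof (cases "N \<le> 2^h")
    case True
    have "gp p (y 0) (y N) \<ge> R - S - real h * hdelta" using Suc.IH[of N y] Suc.prems True by blast
    then show ?thesis using hdelta_nonneg by (simp add: ring_distribs)
  next
    case False
    define M :: nat where "M = 2^h"
    have MN: "M < N" "N - M \<le> 2^h" using False Suc.prems(6) by (auto simp: M_def)
    have g1: "gp p (y 0) (y M) \<ge> R - S - real h * hdelta"
      using Suc.IH[of M y] Suc.prems MN by (auto simp: M_def)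
    have g2: "gp p (y (M + 0)) (y (M + (N - M))) \<ge> R - S - real h * hdelta"
      using Suc.IH[of "N - M" "\<lambda>k. y (M + k)"] Suc.prems MN by auto
    have g2': "gp p (y M) (y N) \<ge> R - S - real h * hdelta" using g2 MN by simp
    have "gp p (y 0) (y N) \<ge> min (gp p (y 0) (y M)) (gp p (y M) (y N)) - hdelta"
      by (rule four) (use Suc.prems MN in auto)
    then show ?thesis using g1 g2' by (simp add: algebra_simps)
  qed
qed

lemma lip_chain:
  assumes "\<forall>k. a \<le> k \<and> k < b \<longrightarrow> hdist (x k) (x (k+1)) \<le> S"
    "\<forall>k. a \<le> k \<and> k \<le> b \<longrightarrow> Im (x k) > 0"
    "a \<le> i" "i \<le> k" "k \<le> (b::int)"
  shows "hdist (x i) (x k) \<le> S * (k - i)"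
proof -
  have "\<forall>k. i \<le> k \<and> k \<le> b \<and> nat (k - i) = n \<longrightarrow> hdist (x i) (x k) \<le> S * (k - i)" for n
  proof (induction n)
    case 0
    then show ?case by auto
  next
    case (Suc n)
    show ?case
    proof (intro allI impI)
      fix k assume k: "i \<le> k \<and> k \<le> b \<and> nat (k - i) = Suc n"
      have "hdist (x i) (x k) \<le> hdist (x i) (x (k-1)) + hdist (x (k-1)) (x k)"
        by (rule hdist_triangle) (use assms k in auto)
      also have "hdist (x i) (x (k-1)) \<le> S * real_of_int ((k - 1) - i)"
      proof -
        have "i \<le> k - 1 \<and> k - 1 \<le> b \<and> nat (k - 1 - i) = n" using k by auto
        note mp[OF spec[OF Suc.IH, of "k-1"] this]
        then have "hdist (x i) (x (k-1)) \<le> S * (real_of_int (k - 1) - real_of_int i)" by simp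
        then show ?thesis by (simp add: of_int_diff)
      qed
      also have "hdist (x (k-1)) (x k) \<le> S"
      proof -
        have "a \<le> k - 1 \<and> k - 1 < b" using assms(3) k by auto
        note mp[OF spec[OF assms(1), of "k-1"] this]
        then have "hdist (x (k-1)) (x (k - 1 + 1)) \<le> S" by simp
        then show ?thesis by simp
      qed
      finally show "hdist (x i) (x k) \<le> S * (k - i)" by (simp add: algebra_simps of_int_diff)
    qed
  qed
  then show ?thesis using assms by auto
qed


lemma morse:
  fixes x :: "int \<Rightarrow> complex"
  assumes im: "\<forall>k. a \<le> k \<and> k \<le> b \<longrightarrow> Im (x k) > 0"
    and st: "\<forall>k. a \<le> k \<and> k < b \<longrightarrow> hdist (x k) (x (k+1)) \<le> S"
    and lo: "\<forall>j k. a \<le> j \<and> j \<le> b \<and> a \<le> k \<and> k \<le> b \<longrightarrow> hdist (x j) (x k) \<ge> \<bar>real_of_int (j - k)\<bar> / C - \<epsilon>"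
    and S: "S > 0" and C: "C > 0" and e: "\<epsilon> \<ge> 0" and h: "b - a \<le> 2^h"
    and m: "a \<le> m" "m \<le> b"
  shows "gp (x m) (x a) (x b) \<le> S * C * (\<epsilon> + 4*S + 2*real h*hdelta + 4*hdelta) / 2"
proof -
  define p where "p = x m"
  define R where "R = gp p (x a) (x b)"
  define K where "K = 4*S + 2*real h*hdelta + 4*hdelta"
  have K0: "K \<ge> 0" using S hdelta_nonneg by (simp add: K_def)
  have pim: "Im p > 0" using im m by (simp add: p_def)
  have ima: "Im (x a) > 0" "Im (x b) > 0" using im m by auto
  show ?thesis
  proof (cases "R \<le> 0")
    case True
    have "0 \<le> S * C * (\<epsilon> + K) / 2" using S C e K0 by simp
    then show ?thesis using True by (simp add: R_def p_def K_def algebra_simps)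
  next
    case False
    then have R: "R > 0" by simp
    have Ra: "hdist p (x a) \<ge> R" unfolding R_def by (rule gp_le_dist) (use pim ima in auto)
    have Rb: "hdist p (x b) \<ge> R" unfolding R_def by (subst gp_sym) (rule gp_le_dist, use pim ima in auto)
        define P where "P t \<longleftrightarrow> hdist p (x (a + int t)) < R" for t
    have Pm: "P (nat (m - a))" using R m by (simp add: P_def p_def)
    define t0 where "t0 = (LEAST t. P t)"
    have Pt0: "P t0" using LeastI[of P, OF Pm] by (simp add: t0_def)
    have t0m: "t0 \<le> nat (m - a)" using Least_le[of P, OF Pm] by (simp add: t0_def)
    have nP: "\<not> P t" if "t < t0" for t using not_less_Least[of t P] that by (simp add: t0_def)
    have t0pos: "t0 > 0" using Pt0 Ra by (cases t0) (auto simp: P_def)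
    define i where "i = a + int t0 - 1"
    have ia: "a \<le> i" "i < m" using t0pos t0m m by (auto simp: i_def)
    have iR: "hdist p (x k) \<ge> R" if "a \<le> k" "k \<le> i" for k
    proof -
      have "nat (k - a) < t0" using that unfolding i_def by linarith
      then show ?thesis using nP[of "nat (k - a)"] that by (simp add: P_def)
    qed
    have iR2: "hdist p (x i) < R + S"
    proof -
      have "hdist p (x i) \<le> hdist p (x (i+1)) + hdist (x (i+1)) (x i)"
        by (rule hdist_triangle) (use pim im ia m in auto)
      moreover have "hdist p (x (i+1)) < R" using Pt0 by (simp add: P_def i_def)
      moreover have "hdist (x i) (x (i+1)) \<le> S" using st ia m by auto
      ultimately show ?thesis by (simp add: hdist_sym)
    qed
        define Q where "Q t \<longleftrightarrow> hdist p (x (b - int t)) < R" for t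
    have Qm: "Q (nat (b - m))" using R m by (simp add: Q_def p_def)
    define t1 where "t1 = (LEAST t. Q t)"
    have Qt1: "Q t1" using LeastI[of Q, OF Qm] by (simp add: t1_def)
    have t1m: "t1 \<le> nat (b - m)" using Least_le[of Q, OF Qm] by (simp add: t1_def)
    have nQ: "\<not> Q t" if "t < t1" for t using not_less_Least[of t Q] that by (simp add: t1_def)
    have t1pos: "t1 > 0" using Qt1 Rb by (cases t1) (auto simp: Q_def)
    define j where "j = b - int t1 + 1"
    have jb: "j \<le> b" "m < j" using t1pos t1m m by (auto simp: j_def)
    have jR: "hdist p (x k) \<ge> R" if "j \<le> k" "k \<le> b" for k
    proof -
      have "nat (b - k) < t1" using that unfolding j_def by linarith
      then show ?thesis using nQ[of "nat (b - k)"] that by (simp add: Q_def)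
    qed
    have jR2: "hdist p (x j) < R + S"
    proof -
      have "hdist p (x j) \<le> hdist p (x (j-1)) + hdist (x (j-1)) (x j)"
        by (rule hdist_triangle) (use pim im jb m in auto)
      moreover have "hdist p (x (j-1)) < R" using Qt1 by (simp add: Q_def j_def)
      moreover have "hdist (x (j-1)) (x j) \<le> S"
      proof -
        have "a \<le> j - 1 \<and> j - 1 < b" using jb m by auto
        note mp[OF spec[OF st, of "j-1"] this]
        then show ?thesis by simp
      qed
      ultimately show ?thesis by simp
    qed
        have g1: "gp p (x a) (x i) \<ge> R - S - real h * hdelta"
    proof -
      have "gp p ((\<lambda>k. x (a + int k)) 0) ((\<lambda>k. x (a + int k)) (nat (i - a))) \<ge> R - S - real h * hdelta"
      proof (rule log_chain)
        show "\<forall>k\<le>nat (i - a). 0 < Im (x (a + int k))" using im ia m by auto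
        show "0 < Im p" by (rule pim)
        show "\<forall>k\<le>nat (i - a). R \<le> hdist p (x (a + int k))" using iR ia by auto
        show "\<forall>k<nat (i - a). hdist (x (a + int k)) (x (a + int (Suc k))) \<le> S"
        proof (intro allI impI)
          fix k assume "k < nat (i - a)"
          then have "a \<le> a + int k \<and> a + int k < b" using ia m by auto
          note mp[OF spec[OF st, of "a + int k"] this]
          then show "hdist (x (a + int k)) (x (a + int (Suc k))) \<le> S" by (simp add: ac_simps)
        qed
        show "0 \<le> S" using S by simp
        have "i - a \<le> 2^h" using h ia m by linarith
        then show "nat (i - a) \<le> 2 ^ h" by (simp add: nat_le_iff)
      qed
      then show ?thesis using ia by simp
    qed
    have g2: "gp p (x b) (x j) \<ge> R - S - real h * hdelta"
    proof -
      have "gp p ((\<lambda>k. x (b - int k)) 0) ((\<lambda>k. x (b - int k)) (nat (b - j))) \<ge> R - S - real h * hdelta"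
      proof (rule log_chain)
        show "\<forall>k\<le>nat (b - j). 0 < Im (x (b - int k))" using im jb m by auto
        show "0 < Im p" by (rule pim)
        show "\<forall>k\<le>nat (b - j). R \<le> hdist p (x (b - int k))" using jR jb by auto
        show "\<forall>k<nat (b - j). hdist (x (b - int k)) (x (b - int (Suc k))) \<le> S"
        proof (intro allI impI)
          fix k assume "k < nat (b - j)"
          then have "a \<le> b - int k - 1 \<and> b - int k - 1 < b" using jb m by auto
          note mp[OF spec[OF st, of "b - int k - 1"] this]
          then show "hdist (x (b - int k)) (x (b - int (Suc k))) \<le> S" by (simp add: hdist_sym algebra_simps)
        qed
        show "0 \<le> S" using S by simp
        have "b - j \<le> 2^h" using h jb m by linarith
        then show "nat (b - j) \<le> 2 ^ h" by (simp add: nat_le_iff)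
      qed
      then show ?thesis using jb by simp
    qed
    have imi: "Im (x i) > 0" "Im (x j) > 0" using im ia jb m by auto
    have f1: "gp p (x i) (x j) \<ge> min (gp p (x i) (x a)) (gp p (x a) (x j)) - hdelta"
      by (rule four) (use pim imi ima in auto)
    have f2: "gp p (x a) (x j) \<ge> min (gp p (x a) (x b)) (gp p (x b) (x j)) - hdelta"
      by (rule four) (use pim imi ima in auto)
    have hh: "real h * hdelta \<ge> 0" using hdelta_nonneg by simp
    have gij: "gp p (x i) (x j) \<ge> R - S - real h * hdelta - 2 * hdelta"
    proof -
      have "min (gp p (x a) (x b)) (gp p (x b) (x j)) \<ge> R - S - real h * hdelta"
        unfolding min.bounded_iff using g2 hh S R_def by linarith
      then have A: "gp p (x a) (x j) \<ge> R - S - real h * hdelta - hdelta" using f2 by linarith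
      have "min (gp p (x i) (x a)) (gp p (x a) (x j)) \<ge> R - S - real h * hdelta - hdelta"
        unfolding min.bounded_iff using A g1 gp_sym[of p "x i" "x a"] hdelta_nonneg by linarith
      then show ?thesis using f1 by linarith
    qed
    have up: "hdist (x i) (x j) \<le> K"
      using dist_gp[of "x i" "x j" p] gij iR2 jR2 by (simp add: K_def algebra_simps)
    have low: "hdist (x i) (x j) \<ge> real_of_int (j - i) / C - \<epsilon>"
    proof -
      have "a \<le> i \<and> i \<le> b \<and> a \<le> j \<and> j \<le> b" using ia jb m by linarith
      note mp[OF spec[OF spec[OF lo, of i], of j] this]
      moreover have "\<bar>real_of_int (i - j)\<bar> = real_of_int (j - i)" using ia jb m by simp
      ultimately show ?thesis by simp
    qed
    have l1: "R \<le> S * real_of_int (m - i)"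
    proof -
      have "hdist (x i) (x m) \<le> S * (m - i)" by (rule lip_chain[of a b x S]) (use st im ia m in auto)
      then show ?thesis using iR[of i] ia hdist_sym[of p "x i"] by (simp add: p_def)
    qed
    have l2: "R \<le> S * real_of_int (j - m)"
    proof -
      have "hdist (x m) (x j) \<le> S * (j - m)" by (rule lip_chain[of a b x S]) (use st im jb m in auto)
      then show ?thesis using jR[of j] jb by (simp add: p_def)
    qed
    have "2 * R \<le> S * real_of_int (j - i)" using l1 l2 by (simp add: algebra_simps)
    moreover have "real_of_int (j - i) \<le> C * (K + \<epsilon>)"
    proof -
      have "real_of_int (j - i) / C \<le> K + \<epsilon>" using up low by simp
      then show ?thesis using C by (simp add: divide_le_eq mult.commute)
    qed
    ultimately have "2 * R \<le> S * (C * (K + \<epsilon>))"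
      using S by (meson mult_left_mono less_imp_le order_trans)
    then show ?thesis by (simp add: R_def p_def K_def algebra_simps)
  qed
qed


lemma chain_lemma:
  fixes y :: "nat \<Rightarrow> complex"
  assumes im: "\<forall>k\<le>N. Im (y k) > 0"
    and gpc: "\<forall>i. 0 < i \<and> i < N \<longrightarrow> gp (y i) (y (i-1)) (y (Suc i)) \<le> c"
    and dd: "\<forall>i<N. hdist (y i) (y (Suc i)) \<ge> D"
    and c0: "c \<ge> 0" and D: "D > 2*c + 2*hdelta"
  shows "hdist (y 0) (y N) \<ge> real N * (D - 2*c - 2*hdelta)"
proof -
  have claim: "Suc n \<le> N \<longrightarrow> gp (y n) (y 0) (y (Suc n)) \<le> c + hdelta \<and>
      hdist (y 0) (y (Suc n)) \<ge> real (Suc n) * (D - 2*c - 2*hdelta)" for n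
  proof (induction n)
    case 0
    show ?case
    proof
      assume N: "Suc 0 \<le> N"
      have "gp (y 0) (y 0) (y (Suc 0)) = 0" by (simp add: gp_def)
      moreover have "hdist (y 0) (y (Suc 0)) \<ge> D" using dd N by auto
      ultimately show "gp (y 0) (y 0) (y (Suc 0)) \<le> c + hdelta \<and>
        hdist (y 0) (y (Suc 0)) \<ge> real (Suc 0) * (D - 2*c - 2*hdelta)"
        using c0 hdelta_nonneg by simp
    qed
  next
    case (Suc n)
    show ?case
    proof
      assume N: "Suc (Suc n) \<le> N"
      let ?q = "y (Suc n)"
      have IH: "gp (y n) (y 0) ?q \<le> c + hdelta" "hdist (y 0) ?q \<ge> real (Suc n) * (D - 2*c - 2*hdelta)"
        using Suc.IH N by auto
      have ims: "Im (y n) > 0" "Im ?q > 0" "Im (y 0) > 0" "Im (y (Suc (Suc n))) > 0" using im N by auto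
      have f: "gp ?q (y n) (y (Suc (Suc n))) \<ge> min (gp ?q (y n) (y 0)) (gp ?q (y 0) (y (Suc (Suc n)))) - hdelta"
        by (rule four) (use ims in auto)
      have g: "gp ?q (y n) (y (Suc (Suc n))) \<le> c"
      proof -
        have "0 < Suc n \<and> Suc n < N" using N by auto
        note mp[OF spec[OF gpc, of "Suc n"] this]
        then show ?thesis by simp
      qed
      have sw: "gp ?q (y n) (y 0) = hdist (y n) ?q - gp (y n) ?q (y 0)"
        using gp_swap[of ?q "y n" "y 0"] by simp
      have "gp (y n) ?q (y 0) = gp (y n) (y 0) ?q" by (rule gp_sym)
      moreover have "hdist (y n) ?q \<ge> D" using dd N by auto
      ultimately have big: "gp ?q (y n) (y 0) \<ge> D - c - hdelta" using sw IH(1) by simp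
      have small: "gp ?q (y 0) (y (Suc (Suc n))) \<le> c + hdelta"
      proof (rule ccontr)
        assume "\<not> ?thesis"
        then have "min (gp ?q (y n) (y 0)) (gp ?q (y 0) (y (Suc (Suc n)))) > c + hdelta"
          using big D by (simp add: min_def)
        then show False using f g by linarith
      qed
      have "hdist (y 0) (y (Suc (Suc n))) = hdist ?q (y 0) + hdist ?q (y (Suc (Suc n))) - 2 * gp ?q (y 0) (y (Suc (Suc n)))"
        by (rule dist_gp)
      moreover have "hdist ?q (y (Suc (Suc n))) \<ge> D" using dd N by auto
      ultimately have "hdist (y 0) (y (Suc (Suc n))) \<ge> real (Suc n) * (D - 2*c - 2*hdelta) + (D - 2*c - 2*hdelta)"
        using IH(2) small hdist_sym[of "y 0" ?q] by linarith
      then show "gp ?q (y 0) (y (Suc (Suc n))) \<le> c + hdelta \<and>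
          hdist (y 0) (y (Suc (Suc n))) \<ge> real (Suc (Suc n)) * (D - 2*c - 2*hdelta)"
        using small by (simp add: algebra_simps)
    qed
  qed
  show ?thesis
  proof (cases N)
    case 0
    then show ?thesis by simp
  next
    case (Suc n)
    then show ?thesis using claim[of n] by simp
  qed
qed


definition good :: "nat \<Rightarrow> (nat \<Rightarrow> m2) \<Rightarrow> bool" where
  "good r A \<longleftrightarrow> (\<forall>i<r. det (A i) = 1)"

lemma eval_Nil [simp]: "eval A [] = mat 1" by (simp add: eval_def)
lemma eval_Cons [simp]: "eval A (x # u) = letter_mat A x ** eval A u" by (simp add: eval_def)
lemma eval_append: "eval A (u @ v) = eval A u ** eval A v"
  by (induction u) (simp_all add: matrix_mul_assoc)

lemma det_letter: "good r A \<Longrightarrow> fst x < r \<Longrightarrow> det (letter_mat A x) = 1"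
  by (auto simp: letter_mat_def good_def matrix_inv_det1)

lemma det_eval: "good r A \<Longrightarrow> word_over r u \<Longrightarrow> det (eval A u) = 1"
  by (induction u) (auto simp: word_over_def det_mult2 det_letter)

lemma inv_letter_mat: "good r A \<Longrightarrow> fst x < r \<Longrightarrow> letter_mat A (inv_letter x) ** letter_mat A x = mat 1"
  by (auto simp: letter_mat_def inv_letter_def good_def matrix_inv_det1 adj2_inv)

lemma winv_Cons: "winv (x # u) = winv u @ [inv_letter x]"
  by (simp add: winv_def)

lemma eval_winv: "good r A \<Longrightarrow> word_over r u \<Longrightarrow> eval A (winv u) ** eval A u = mat 1"
proof (induction u)
  case Nil then show ?case by (simp add: winv_def)
next
  case (Cons x u)
  have x: "fst x < r" and u: "word_over r u" using Cons.prems by (auto simp: word_over_def)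
  have "eval A (winv (x # u)) ** eval A (x # u) = eval A (winv u) ** ((letter_mat A (inv_letter x) ** letter_mat A x) ** eval A u)"
    by (simp add: winv_Cons eval_append matrix_mul_assoc)
  also have "\<dots> = mat 1" using inv_letter_mat[OF Cons.prems(1) x] Cons.IH[OF Cons.prems(1) u] by simp
  finally show ?case .
qed

lemma word_over_winv: "word_over r u \<Longrightarrow> word_over r (winv u)"
  by (auto simp: word_over_def winv_def inv_letter_def)

lemma word_over_append: "word_over r (u @ v) \<longleftrightarrow> word_over r u \<and> word_over r v"
  by (auto simp: word_over_def)

lemma word_over_concat_rep: "word_over r u \<Longrightarrow> word_over r (concat (replicate n u))"
  by (induction n) (auto simp: word_over_def)

lemma word_over_take: "word_over r u \<Longrightarrow> word_over r (take n u)"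
  by (auto simp: word_over_def dest: in_set_takeD)

definition pre :: "word \<Rightarrow> int \<Rightarrow> word" where
  "pre w q = (if q \<ge> 0 then concat (replicate (nat q) w) else concat (replicate (nat (- q)) (winv w)))"

lemma vert_pre: "vert w k = pre w (k div int (length w)) @ take (nat (k mod int (length w))) w"
  by (simp add: vert_def pre_def Let_def)

lemma word_over_pre: "word_over r w \<Longrightarrow> word_over r (pre w q)"
  by (simp add: pre_def word_over_concat_rep word_over_winv)

lemma word_over_vert: "word_over r w \<Longrightarrow> word_over r (vert w k)"
  by (simp add: vert_pre word_over_append word_over_pre word_over_take)

lemma concat_rep_Suc: "concat (replicate (Suc n) u) = concat (replicate n u) @ u"
  by (simp flip: replicate_append_same)

lemma eval_rep_Suc: "eval A (concat (replicate (Suc n) u)) = eval A (concat (replicate n u)) ** eval A u"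
  by (simp only: concat_rep_Suc eval_append)

lemma pre_step: assumes "good r A" "word_over r w"
  shows "eval A (pre w (q + 1)) = eval A (pre w q) ** eval A w"
proof (cases "q \<ge> 0")
  case True
  then have e: "nat (q + 1) = Suc (nat q)" by simp
  show ?thesis using True by (simp add: e pre_def eval_rep_Suc del: replicate_Suc)
next
  case False
  show ?thesis
  proof (cases "q = -1")
    case True
    then show ?thesis using eval_winv[OF assms] by (simp add: pre_def)
  next
    case False2: False
    then have q: "q + 1 < 0" "nat (- q) = Suc (nat (- (q + 1)))" using False by auto
    have "eval A (pre w q) ** eval A w = eval A (pre w (q+1)) ** (eval A (winv w) ** eval A w)"
      using q False by (simp add: pre_def eval_rep_Suc matrix_mul_assoc del: replicate_Suc)
    then show ?thesis using eval_winv[OF assms] by simp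
  qed
qed

lemma take_nth_eval: "n < length w \<Longrightarrow> eval A (take (Suc n) w) = eval A (take n w) ** letter_mat A (w ! n)"
  by (simp add: take_Suc_conv_app_nth eval_append)

lemma vert_step: assumes A: "good r A" and w: "word_over r w" "w \<noteq> []"
  shows "eval A (vert w (k + 1)) = eval A (vert w k) ** letter_mat A (w ! nat (k mod int (length w)))"
proof -
  define m where "m = int (length w)"
  have m: "m > 0" using w by (simp add: m_def)
  define q where "q = k div m"
  define r' where "r' = k mod m"
  have k: "k = r' + q * m" "0 \<le> r'" "r' < m" using m by (auto simp: q_def r'_def)
  have v: "vert w j = pre w (j div m) @ take (nat (j mod m)) w" for j by (simp add: vert_pre m_def)
  show ?thesis
  proof (cases "r' + 1 < m")
    case True
    have d: "(k + 1) div m = q" "(k + 1) mod m = r' + 1"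
    proof -
      have e: "k + 1 = (r' + 1) + q * m" using k by simp
      show "(k + 1) div m = q" unfolding e using m k True by (simp add: div_mult_self1)
      show "(k + 1) mod m = r' + 1" unfolding e using m k True by (simp add: mod_mult_self1)
    qed
    have nr: "nat (r' + 1) = Suc (nat r')" "nat r' < length w" using k True by (auto simp: m_def)
    show ?thesis
      by (simp add: v d nr eval_append take_nth_eval matrix_mul_assoc flip: q_def r'_def m_def)
  next
    case False
    then have r1: "r' = m - 1" using k by simp
    have d: "(k + 1) div m = q + 1" "(k + 1) mod m = 0"
    proof -
      have e: "k + 1 = 0 + (q + 1) * m" using k r1 by (simp add: algebra_simps)
      show "(k + 1) div m = q + 1" unfolding e using m by (simp add: div_mult_self1)
      show "(k + 1) mod m = 0" unfolding e using m by (simp add: mod_mult_self1)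
    qed
    have nr: "Suc (nat r') = length w" "nat r' < length w" using w(2) r1 unfolding m_def by (cases w; simp)+
    have tk: "eval A (take (nat r') w) ** letter_mat A (w ! nat r') = eval A w"
      using take_nth_eval[OF nr(2), of A] nr(1) by simp
    have "eval A (vert w (k+1)) = eval A (pre w q) ** eval A w"
      by (simp add: v d eval_append pre_step[OF A w(1)] flip: q_def r'_def m_def)
    also have "\<dots> = eval A (pre w q) ** (eval A (take (nat r') w) ** letter_mat A (w ! nat r'))"
      using tk by simp
    also have "\<dots> = eval A (vert w k) ** letter_mat A (w ! nat (k mod int (length w)))"
      by (simp add: v eval_append matrix_mul_assoc flip: q_def r'_def m_def)
    finally show ?thesis .
  qed
qed

definition seg :: "word \<Rightarrow> int \<Rightarrow> nat \<Rightarrow> word" where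
  "seg w k j = map (\<lambda>i. w ! nat ((k + int i) mod int (length w))) [0..<j]"

lemma length_seg [simp]: "length (seg w k j) = j"
  by (simp add: seg_def)

lemma word_over_seg: assumes "word_over r w" "w \<noteq> []" shows "word_over r (seg w k j)"
proof -
  have "w ! nat ((k + int i) mod int (length w)) \<in> set w" for i
    using assms(2) by (intro nth_mem) (simp add: nat_less_iff)
  then show ?thesis using assms(1) by (auto simp: seg_def word_over_def)
qed

lemma vert_seg: assumes A: "good r A" and w: "word_over r w" "w \<noteq> []"
  shows "eval A (vert w (k + int j)) = eval A (vert w k) ** eval A (seg w k j)"
proof (induction j)
  case 0 then show ?case by (simp add: seg_def)
next
  case (Suc j)
  have "eval A (vert w (k + int (Suc j))) = eval A (vert w ((k + int j) + 1))" by (simp add: ac_simps)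
  also have "\<dots> = eval A (vert w k) ** eval A (seg w k j) ** letter_mat A (w ! nat ((k + int j) mod int (length w)))"
    by (simp add: vert_step[OF A w] Suc)
  also have "\<dots> = eval A (vert w k) ** eval A (seg w k (Suc j))"
    by (simp add: seg_def eval_append matrix_mul_assoc)
  finally show ?case .
qed


definition Xp :: "(nat \<Rightarrow> m2) \<Rightarrow> complex \<Rightarrow> word \<Rightarrow> int \<Rightarrow> complex" where
  "Xp A z w k = mob (eval A (vert w k)) z"

definition fd :: "(nat \<Rightarrow> m2) \<Rightarrow> complex \<Rightarrow> word \<Rightarrow> real" where
  "fd A z u = hdist z (mob (eval A u) z)"

lemma Xp_im: "good r A \<Longrightarrow> word_over r w \<Longrightarrow> Im z > 0 \<Longrightarrow> Im (Xp A z w k) > 0"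
  unfolding Xp_def by (rule Im_mob_pos) (auto intro: det_eval word_over_vert)

lemma Xp_dist: assumes A: "good r A" and w: "word_over r w" "w \<noteq> []" and z: "Im z > 0"
  shows "hdist (Xp A z w k) (Xp A z w (k + int j)) = fd A z (seg w k j)"
proof -
  have d1: "det (eval A (vert w k)) = 1" using det_eval[OF A word_over_vert[OF w(1)]] .
  have d2: "det (eval A (seg w k j)) = 1" using det_eval[OF A word_over_seg[OF w]] .
  have "Xp A z w (k + int j) = mob (eval A (vert w k)) (mob (eval A (seg w k j)) z)"
    by (simp add: Xp_def vert_seg[OF A w] mob_mult[OF d2 z])
  then show ?thesis
    using hdist_mob[OF d1 z Im_mob_pos[OF d2 z]] by (simp add: Xp_def fd_def)
qed

lemma Xp_dist': assumes A: "good r A" and w: "word_over r w" "w \<noteq> []" and z: "Im z > 0" and jk: "j \<le> k"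
  shows "hdist (Xp A z w j) (Xp A z w k) = fd A z (seg w j (nat (k - j)))"
  using Xp_dist[OF A w z, of j "nat (k - j)"] jk by simp

lemma fd_nonneg: "good r A \<Longrightarrow> word_over r u \<Longrightarrow> Im z > 0 \<Longrightarrow> fd A z u \<ge> 0"
  unfolding fd_def by (rule hdist_nonneg) (auto intro: Im_mob_pos det_eval)

lemma gamma_Xp: "gamma A z w t = geod_pt (Xp A z w \<lfloor>t\<rfloor>) (Xp A z w (\<lfloor>t\<rfloor> + 1)) (t - of_int \<lfloor>t\<rfloor>)"
  by (simp add: gamma_def Xp_def)

lemma gamma_int: assumes "good r A" "word_over r w" "Im z > 0"
  shows "gamma A z w (of_int k) = Xp A z w k"
  using geod_pt_0[OF Xp_im[OF assms, of k] Xp_im[OF assms, of "k+1"]] by (simp add: gamma_Xp)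

lemma gamma_props: assumes "good r A" "word_over r w" "Im z > 0"
  shows "Im (gamma A z w t) > 0 \<and> hdist (Xp A z w \<lfloor>t\<rfloor>) (gamma A z w t) \<le> hdist (Xp A z w \<lfloor>t\<rfloor>) (Xp A z w (\<lfloor>t\<rfloor> + 1))"
proof -
  let ?s = "t - of_int \<lfloor>t\<rfloor>"
  have s: "0 \<le> ?s" "?s \<le> 1" by linarith+
  note sp = geod_pt_spec[OF Xp_im[OF assms, of "\<lfloor>t\<rfloor>"] Xp_im[OF assms, of "\<lfloor>t\<rfloor>+1"] s]
  have "?s * hdist (Xp A z w \<lfloor>t\<rfloor>) (Xp A z w (\<lfloor>t\<rfloor> + 1)) \<le> hdist (Xp A z w \<lfloor>t\<rfloor>) (Xp A z w (\<lfloor>t\<rfloor> + 1))"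
    using s hdist_nonneg[OF Xp_im[OF assms, of "\<lfloor>t\<rfloor>"] Xp_im[OF assms, of "\<lfloor>t\<rfloor>+1"]]
    by (simp add: mult_left_le_one_le)
  then show ?thesis using sp by (simp add: gamma_Xp)
qed


lemma div_lower: "(b::int) > 0 \<Longrightarrow> real_of_int (a div b) \<ge> real_of_int a / real_of_int b - 1"
proof -
  assume b: "b > 0"
  have e: "a = b * (a div b) + a mod b" by simp
  have m: "a mod b < b" using b by simp
  have "real_of_int a = real_of_int (b * (a div b) + a mod b)" by (rule arg_cong[OF e])
  then have "real_of_int a = real_of_int b * real_of_int (a div b) + real_of_int (a mod b)"
    by (simp only: of_int_add of_int_mult)
  then have "real_of_int a / real_of_int b = real_of_int (a div b) + real_of_int (a mod b) / real_of_int b"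
    using b by (simp add: field_simps)
  moreover have "real_of_int (a mod b) / real_of_int b \<le> 1"
  proof -
    have mm: "real_of_int (a mod b) \<le> real_of_int b" using m by linarith
    then show ?thesis using b by (simp add: divide_le_eq_1)
  qed
  ultimately show ?thesis by simp
qed

lemma lip_all:
  assumes im: "\<forall>k. Im (x k) > 0" and st: "\<forall>k. hdist (x k) (x (k+1)) \<le> S"
  shows "hdist (x j) (x k) \<le> S * \<bar>real_of_int (k - j)\<bar>"
proof (cases "j \<le> k")
  case True
  have "hdist (x j) (x k) \<le> S * (k - j)" by (rule lip_chain[of j k x S]) (use im st True in auto)
  then show ?thesis using True by simp
next
  case False
  have "hdist (x k) (x j) \<le> S * (j - k)" by (rule lip_chain[of k j x S]) (use im st False in auto)
  then show ?thesis using False by (simp add: hdist_sym)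
qed

lemma global_lower_le:
  fixes x :: "int \<Rightarrow> complex" and L :: nat
  assumes im: "\<forall>k. Im (x k) > 0"
    and st: "\<forall>k. hdist (x k) (x (k+1)) \<le> S"
    and L: "L \<ge> 1"
    and gpc: "\<forall>m. gp (x m) (x (m - int L)) (x (m + int L)) \<le> c"
    and dd: "\<forall>m. hdist (x m) (x (m + int L)) \<ge> D"
    and c0: "c \<ge> 0" and mu: "D - 2*c - 2*hdelta \<ge> 1"
    and jk: "j \<le> k"
  shows "hdist (x j) (x k) \<ge> real_of_int (k - j) / L - 1 - S * L"
proof -
  define N where "N = nat ((k - j) div int L)"
  define y where "y i = x (j + int i * int L)" for i
  have ch: "hdist (y 0) (y N) \<ge> real N * (D - 2*c - 2*hdelta)"
  proof (rule chain_lemma)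
    show "\<forall>k\<le>N. 0 < Im (y k)" using im by (simp add: y_def)
    show "\<forall>i. 0 < i \<and> i < N \<longrightarrow> gp (y i) (y (i - 1)) (y (Suc i)) \<le> c"
    proof (intro allI impI)
      fix i assume i: "0 < i \<and> i < N"
      have e1: "j + int (i - 1) * int L = (j + int i * int L) - int L" using i by (simp add: of_nat_diff algebra_simps)
      have e2: "j + int (Suc i) * int L = (j + int i * int L) + int L" by (simp add: algebra_simps)
      show "gp (y i) (y (i - 1)) (y (Suc i)) \<le> c" using gpc unfolding y_def e1 e2 by blast
    qed
    show "\<forall>i<N. D \<le> hdist (y i) (y (Suc i))"
    proof (intro allI impI)
      fix i assume "i < N"
      have e2: "j + int (Suc i) * int L = (j + int i * int L) + int L" by (simp add: algebra_simps)
      show "D \<le> hdist (y i) (y (Suc i))" using dd unfolding y_def e2 by blast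
    qed
    show "0 \<le> c" by (rule c0)
    show "2 * c + 2 * hdelta < D" using mu by simp
  qed
  have "real N * (D - 2*c - 2*hdelta) \<ge> real N" using mu by (metis mult.right_neutral mult_left_mono of_nat_0_le_iff)
  with ch have h1: "hdist (x j) (y N) \<ge> real N" by (simp add: y_def)
  define k' where "k' = j + int N * int L"
  have Lp: "int L > 0" using L by simp
  have Nd: "int N = (k - j) div int L" using jk Lp by (simp add: N_def pos_imp_zdiv_nonneg_iff)
  have kk: "k' \<le> k" "k - k' < int L"
  proof -
    have "k - j = int L * ((k - j) div int L) + (k - j) mod int L" by simp
    then have "k - k' = (k - j) mod int L" by (simp add: k'_def Nd algebra_simps)
    moreover have "0 \<le> (k - j) mod int L" "(k - j) mod int L < int L" using Lp by simp_all
    ultimately show "k' \<le> k" "k - k' < int L" by linarith+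
  qed
  have h2: "hdist (x k') (x k) \<le> S * L"
  proof -
    have "hdist (x k') (x k) \<le> S * (k - k')" by (rule lip_chain[of k' k x S]) (use im st kk in auto)
    moreover have "S \<ge> 0" using st im hdist_nonneg by (meson order_trans)
    moreover have "real_of_int (k - k') \<le> real L" using kk by linarith
    ultimately show ?thesis by (meson mult_left_mono order_trans)
  qed
  have tri: "hdist (x j) (x k') \<le> hdist (x j) (x k) + hdist (x k) (x k')"
    by (rule hdist_triangle) (use im in auto)
  have Nl: "real N \<ge> real_of_int (k - j) / L - 1"
    using div_lower[OF Lp, of "k - j"] Nd by simp
  show ?thesis using h1 h2 tri Nl hdist_sym[of "x k" "x k'"] by (simp add: y_def k'_def)
qed

lemma global_lower:
  fixes x :: "int \<Rightarrow> complex" and L :: nat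
  assumes im: "\<forall>k. Im (x k) > 0"
    and st: "\<forall>k. hdist (x k) (x (k+1)) \<le> S"
    and L: "L \<ge> 1"
    and gpc: "\<forall>m. gp (x m) (x (m - int L)) (x (m + int L)) \<le> c"
    and dd: "\<forall>m. hdist (x m) (x (m + int L)) \<ge> D"
    and c0: "c \<ge> 0" and mu: "D - 2*c - 2*hdelta \<ge> 1"
  shows "hdist (x j) (x k) \<ge> \<bar>real_of_int (k - j)\<bar> / L - 1 - S * L"
proof (cases "j \<le> k")
  case True
  then show ?thesis using global_lower_le[OF assms True] by simp
next
  case False
  then show ?thesis using global_lower_le[OF assms, of k j] by (simp add: hdist_sym)
qed

lemma real_bounds:
  fixes x :: "int \<Rightarrow> complex" and g :: "real \<Rightarrow> complex" and L :: nat
  assumes im: "\<forall>k. Im (x k) > 0" and gim: "\<forall>t. Im (g t) > 0"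
    and gn: "\<forall>t. hdist (x \<lfloor>t\<rfloor>) (g t) \<le> S"
    and st: "\<forall>k. hdist (x k) (x (k+1)) \<le> S"
    and lo: "\<forall>j k. hdist (x j) (x k) \<ge> \<bar>real_of_int (k - j)\<bar> / L - B"
    and L: "L \<ge> 1"
  shows "\<bar>t - s\<bar> / max (real L) S - (B + 1 + 2*S) \<le> hdist (g t) (g s) \<and>
         hdist (g t) (g s) \<le> max (real L) S * \<bar>t - s\<bar> + 3 * S"
proof -
  have S0: "S \<ge> 0" using gn hdist_nonneg im gim by (meson order_trans)
  let ?a = "\<lfloor>t\<rfloor>" and ?b = "\<lfloor>s\<rfloor>"
  have fl: "\<bar>real_of_int (?b - ?a)\<bar> \<le> \<bar>t - s\<bar> + 1" "\<bar>real_of_int (?b - ?a)\<bar> \<ge> \<bar>t - s\<bar> - 1"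
    by (simp_all add: abs_if; linarith)+
  have t1: "hdist (x ?a) (x ?b) \<le> hdist (x ?a) (g t) + hdist (g t) (g s) + hdist (g s) (x ?b)"
    using hdist_triangle[of "x ?a" "g t" "x ?b"] hdist_triangle[of "g t" "g s" "x ?b"] im gim by simp
  have t2: "hdist (g t) (g s) \<le> hdist (g t) (x ?a) + hdist (x ?a) (x ?b) + hdist (x ?b) (g s)"
    using hdist_triangle[of "g t" "x ?a" "g s"] hdist_triangle[of "x ?a" "x ?b" "g s"] im gim by simp
  have gt: "hdist (x ?a) (g t) \<le> S" "hdist (x ?b) (g s) \<le> S" using gn by auto
  have Lp: "real L \<ge> 1" using L by simp
  have low1: "hdist (x ?a) (x ?b) \<ge> (\<bar>t - s\<bar> - 1) / L - B"
  proof -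
    have "(\<bar>t - s\<bar> - 1) / L \<le> \<bar>real_of_int (?b - ?a)\<bar> / L" using fl Lp by (simp add: divide_right_mono)
    then show ?thesis using lo by (meson diff_right_mono order_trans)
  qed
  have "(\<bar>t - s\<bar> - 1) / L = \<bar>t - s\<bar> / L - 1 / L" by (simp add: diff_divide_distrib)
  moreover have "1 / real L \<le> 1" using Lp by simp
  moreover have "\<bar>t - s\<bar> / max (real L) S \<le> \<bar>t - s\<bar> / L" using Lp by (simp add: frac_le)
  ultimately have lower: "\<bar>t - s\<bar> / max (real L) S - (B + 1 + 2*S) \<le> hdist (g t) (g s)"
    using low1 t1 gt hdist_sym[of "g s" "x ?b"] by linarith
  have up1: "hdist (x ?a) (x ?b) \<le> S * (\<bar>t - s\<bar> + 1)"
  proof -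
    have "hdist (x ?a) (x ?b) \<le> S * \<bar>real_of_int (?b - ?a)\<bar>" by (rule lip_all[OF im st])
    also have "\<dots> \<le> S * (\<bar>t - s\<bar> + 1)" using fl S0 by (simp add: mult_left_mono)
    finally show ?thesis .
  qed
  have "S * \<bar>t - s\<bar> \<le> max (real L) S * \<bar>t - s\<bar>" by (simp add: mult_right_mono)
  then have upper: "hdist (g t) (g s) \<le> max (real L) S * \<bar>t - s\<bar> + 3 * S"
    using up1 t2 gt hdist_sym[of "g t" "x ?a"] by (simp add: algebra_simps)
  show ?thesis using lower upper by simp
qed


lemma sq_le_pow2: "n \<ge> 4 \<Longrightarrow> n^2 \<le> (2::nat)^n"
proof (induction n rule: dec_induct)
  case base then show ?case by simp
next
  case (step n)
  have "(Suc n)^2 = n^2 + 2*n + 1" by (simp add: power2_eq_square)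
  also have "\<dots> \<le> n^2 + n^2"
  proof -
    have "4 * n \<le> n * n" by (rule mult_le_mono1[OF step(1)])
    then show ?thesis using step(1) unfolding power2_eq_square by linarith
  qed
  also have "\<dots> \<le> 2^Suc n" using step(3) by simp
  finally show ?case .
qed

lemma pow_big: assumes "(a::real) \<ge> 0" "b \<ge> 0" shows "\<exists>h::nat. a * real h + b \<le> 2^h"
proof -
  define n where "n = nat \<lceil>a + b\<rceil> + 4"
  have n4: "n \<ge> 4" by (simp add: n_def)
  have nab: "real n \<ge> a + b" unfolding n_def by linarith
  have "b * 1 \<le> b * real n" by (rule mult_left_mono) (use n4 assms in auto)
  then have "a * real n + b \<le> a * real n + b * real n" by simp
  also have "\<dots> = (a + b) * real n" by (simp add: algebra_simps)
  also have "\<dots> \<le> real n * real n" using nab by (simp add: mult_right_mono)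
  also have "\<dots> = real (n^2)" by (simp add: power2_eq_square)
  also have "\<dots> \<le> real (2^n)" using sq_le_pow2[OF n4] by linarith
  finally show ?thesis by auto
qed

definition stab_W :: "word set \<Rightarrow> (nat \<Rightarrow> m2) \<Rightarrow> complex \<Rightarrow> bool" where
  "stab_W W A z \<longleftrightarrow> (\<exists>C \<epsilon>. C \<ge> 1 \<and> \<epsilon> > 0 \<and> (\<forall>w\<in>W. \<forall>t s.
      \<bar>t - s\<bar> / C - \<epsilon> \<le> hdist (gamma A z w t) (gamma A z w s) \<and>
      hdist (gamma A z w t) (gamma A z w s) \<le> C * \<bar>t - s\<bar> + \<epsilon>))"

definition LET :: "nat \<Rightarrow> letter set" where "LET r = {x. fst x < r}"

lemma finite_LET: "finite (LET r)"
proof -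
  have "LET r = {..<r} \<times> UNIV" by (auto simp: LET_def)
  then show ?thesis by simp
qed

lemma word_over_LET: "word_over r u \<longleftrightarrow> set u \<subseteq> LET r"
  by (auto simp: word_over_def LET_def)

lemma seg1: "w \<noteq> [] \<Longrightarrow> seg w k 1 = [w ! nat (k mod int (length w))]"
  by (simp add: seg_def)

lemma stab_open_core:
  assumes W: "\<forall>w\<in>W. w \<noteq> [] \<and> word_over r w"
    and A: "good r A" and z: "Im z > 0" and st: "stab_W W A z"
  shows "\<exists>F. finite F \<and> (\<forall>u\<in>F. word_over r u) \<and>
     (\<forall>A'. good r A' \<and> (\<forall>u\<in>F. \<bar>fd A' z u - fd A z u\<bar> < 1) \<longrightarrow> stab_W W A' z)"
proof -
  obtain C \<epsilon> where C: "C \<ge> 1" and e: "\<epsilon> > 0" and stA: "\<forall>w\<in>W. \<forall>t s.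
      \<bar>t - s\<bar> / C - \<epsilon> \<le> hdist (gamma A z w t) (gamma A z w s) \<and>
      hdist (gamma A z w t) (gamma A z w s) \<le> C * \<bar>t - s\<bar> + \<epsilon>"
    using st unfolding stab_W_def by blast
  define S where "S = 1 + (\<Sum>x\<in>LET r. fd A z [x])"
  have fdS: "fd A z [x] \<le> S - 1" if "x \<in> LET r" for x
  proof -
    have "fd A z [x] \<le> (\<Sum>x\<in>LET r. fd A z [x])"
      by (rule member_le_sum[OF that _ finite_LET]) (auto intro!: fd_nonneg[OF A] z simp: word_over_def LET_def)
    then show ?thesis by (simp add: S_def)
  qed
  have S1: "S \<ge> 1"
    using sum_nonneg[of "LET r" "\<lambda>x. fd A z [x]"] fd_nonneg[OF A _ z]
    by (simp add: S_def word_over_def LET_def)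
  define \<delta> where "\<delta> = hdelta"
  have d0: "\<delta> \<ge> 0" using hdelta_nonneg by (simp add: \<delta>_def)
  define \<alpha> where "\<alpha> = 2 * S * C * C * \<delta>"
  define \<beta> where "\<beta> = C * (\<epsilon> + 5 + 2*\<delta> + S * C * (\<epsilon> + 4*S + 6*\<delta>))"
  have ab: "\<alpha> \<ge> 0" "\<beta> \<ge> 0" using S1 C e d0 by (simp_all add: \<alpha>_def \<beta>_def)
  obtain h :: nat where h: "\<alpha> * real h + \<beta> \<le> 2^h" using pow_big[OF ab] by blast
  define L :: nat where "L = 2^h"
  have L1: "L \<ge> 1" by (simp add: L_def)
  define c0 where "c0 = S * C * (\<epsilon> + 4*S + 2*real (Suc h)*\<delta> + 4*\<delta>) / 2"
  have c00: "c0 \<ge> 0" using S1 C e d0 by (simp add: c0_def)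
  define D' where "D' = real L / C - \<epsilon> - 1"
  have mu: "D' - 2*(c0 + 3/2) - 2*\<delta> \<ge> 1"
  proof -
    have "real L \<ge> \<alpha> * real h + \<beta>" using h by (simp add: L_def)
    then have "real L / C \<ge> (\<alpha> * real h + \<beta>) / C" using C by (simp add: divide_right_mono)
    also have "(\<alpha> * real h + \<beta>) / C = 2 * S * C * \<delta> * real h + (\<epsilon> + 5 + 2*\<delta> + S * C * (\<epsilon> + 4*S + 6*\<delta>))"
      using C by (simp add: \<alpha>_def \<beta>_def field_simps)
    finally have "real L / C \<ge> 2 * S * C * \<delta> * real h + (\<epsilon> + 5 + 2*\<delta> + S * C * (\<epsilon> + 4*S + 6*\<delta>))" .
    moreover have "2 * c0 = S * C * (\<epsilon> + 4*S + 6*\<delta>) + 2 * S * C * \<delta> * real h"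
      by (simp add: c0_def algebra_simps)
    ultimately show ?thesis by (simp add: D'_def)
  qed
  define F where "F = {u. set u \<subseteq> LET r \<and> length u \<le> 2 * L}"
  have fin: "finite F" unfolding F_def by (rule finite_lists_length_le[OF finite_LET])
  have Fw: "\<forall>u\<in>F. word_over r u" by (simp add: F_def word_over_LET)
  have main: "stab_W W A' z" if A': "good r A'" and cl: "\<forall>u\<in>F. \<bar>fd A' z u - fd A z u\<bar> < 1" for A'
  proof -
    define C' where "C' = max (real L) S"
    define e' where "e' = 2 + S * real L + 3 * S"
    have "\<forall>w\<in>W. \<forall>t s. \<bar>t - s\<bar> / C' - e' \<le> hdist (gamma A' z w t) (gamma A' z w s) \<and>
      hdist (gamma A' z w t) (gamma A' z w s) \<le> C' * \<bar>t - s\<bar> + e'"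
    proof (intro ballI allI)
      fix w t s assume wW: "w \<in> W"
      have w: "word_over r w" "w \<noteq> []" using W wW by auto
      define x where "x = Xp A z w"
      define x' where "x' = Xp A' z w"
      have imx: "\<forall>k. Im (x k) > 0" using Xp_im[OF A w(1) z] by (simp add: x_def)
      have imx': "\<forall>k. Im (x' k) > 0" using Xp_im[OF A' w(1) z] by (simp add: x'_def)
      have close: "\<bar>hdist (x' j) (x' k) - hdist (x j) (x k)\<bar> < 1" if "j \<le> k" "k - j \<le> 2 * int L" for j k
      proof -
        have "seg w j (nat (k - j)) \<in> F"
          using word_over_seg[OF w] that by (simp add: F_def word_over_LET[symmetric])
        then show ?thesis using cl Xp_dist'[OF A w z that(1)] Xp_dist'[OF A' w z that(1)]
          by (simp add: x_def x'_def)
      qed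
      have lowA: "hdist (x j) (x k) \<ge> \<bar>real_of_int (j - k)\<bar> / C - \<epsilon>" for j k
      proof -
        have "\<bar>real_of_int j - real_of_int k\<bar> / C - \<epsilon> \<le> hdist (gamma A z w (of_int j)) (gamma A z w (of_int k))"
          using stA wW by blast
        then show ?thesis by (simp add: gamma_int[OF A w(1) z] x_def)
      qed
      have stepA: "hdist (x k) (x (k+1)) \<le> S - 1" for k
      proof -
        have "hdist (x k) (x (k + int 1)) = fd A z (seg w k 1)" using Xp_dist[OF A w z, of k 1] by (simp add: x_def)
        moreover have "seg w k 1 = [w ! nat (k mod int (length w))]" by (rule seg1[OF w(2)])
        moreover have "w ! nat (k mod int (length w)) \<in> LET r"
        proof -
          have "nat (k mod int (length w)) < length w" using w(2) by (simp add: nat_less_iff)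
          then have "w ! nat (k mod int (length w)) \<in> set w" by (rule nth_mem)
          then show ?thesis using w(1) by (auto simp: word_over_LET)
        qed
        ultimately show ?thesis using fdS by simp
      qed
      have stepA': "hdist (x' k) (x' (k+1)) \<le> S" for k
        using close[of k "k+1"] stepA[of k] L1 by linarith
      have gpA: "gp (x m) (x (m - int L)) (x (m + int L)) \<le> c0" for m
      proof -
        have "gp (x m) (x (m - int L)) (x (m + int L)) \<le> S * C * (\<epsilon> + 4*S + 2*real (Suc h)*hdelta + 4*hdelta) / 2"
        proof (rule morse)
          show "\<forall>k. m - int L \<le> k \<and> k \<le> m + int L \<longrightarrow> 0 < Im (x k)" using imx by simp
          show "\<forall>k. m - int L \<le> k \<and> k < m + int L \<longrightarrow> hdist (x k) (x (k + 1)) \<le> S"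
          proof (intro allI impI)
            fix k show "hdist (x k) (x (k + 1)) \<le> S" using stepA[of k] by linarith
          qed
          show "\<forall>j k. m - int L \<le> j \<and> j \<le> m + int L \<and> m - int L \<le> k \<and> k \<le> m + int L \<longrightarrow>
              \<bar>real_of_int (j - k)\<bar> / C - \<epsilon> \<le> hdist (x j) (x k)" using lowA by simp
          show "0 < S" using S1 by simp
          show "0 < C" using C by simp
          show "0 \<le> \<epsilon>" using e by simp
          show "m + int L - (m - int L) \<le> 2 ^ Suc h" by (simp add: L_def)
          show "m - int L \<le> m" "m \<le> m + int L" by simp_all
        qed
        then show ?thesis by (simp add: c0_def \<delta>_def)
      qed
      have gpA': "gp (x' m) (x' (m - int L)) (x' (m + int L)) \<le> c0 + 3/2" for m
      proof -
        have "\<bar>hdist (x' (m - int L)) (x' m) - hdist (x (m - int L)) (x m)\<bar> < 1" by (rule close) simp_all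
        moreover have "\<bar>hdist (x' m) (x' (m + int L)) - hdist (x m) (x (m + int L))\<bar> < 1" by (rule close) simp_all
        moreover have "\<bar>hdist (x' (m - int L)) (x' (m + int L)) - hdist (x (m - int L)) (x (m + int L))\<bar> < 1" by (rule close) simp_all
        ultimately show ?thesis using gpA[of m] hdist_sym[of "x m"] hdist_sym[of "x' m"] by (simp add: gp_def abs_less_iff)
      qed
      have ddA': "hdist (x' m) (x' (m + int L)) \<ge> D'" for m
      proof -
        have "\<bar>hdist (x' m) (x' (m + int L)) - hdist (x m) (x (m + int L))\<bar> < 1" by (rule close) simp_all
        moreover have "hdist (x m) (x (m + int L)) \<ge> real L / C - \<epsilon>" using lowA[of m "m + int L"] by simp
        ultimately show ?thesis by (simp add: D'_def abs_less_iff)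
      qed
      have glo: "\<forall>j k. hdist (x' j) (x' k) \<ge> \<bar>real_of_int (k - j)\<bar> / L - (1 + S * L)"
        using global_lower[OF imx' _ L1 _ _ _ mu[unfolded \<delta>_def]] stepA' gpA' ddA' c00 by (simp add: algebra_simps)
      have gp': "\<forall>t. Im (gamma A' z w t) > 0 \<and> hdist (x' \<lfloor>t\<rfloor>) (gamma A' z w t) \<le> S"
      proof
        fix t
        show "Im (gamma A' z w t) > 0 \<and> hdist (x' \<lfloor>t\<rfloor>) (gamma A' z w t) \<le> S"
          using gamma_props[OF A' w(1) z, of t] stepA'[of "\<lfloor>t\<rfloor>"] unfolding x'_def by linarith
      qed
      have rb: "\<bar>t - s\<bar> / C' - (1 + S * real L + 1 + 2 * S) \<le> hdist (gamma A' z w t) (gamma A' z w s) \<and>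
         hdist (gamma A' z w t) (gamma A' z w s) \<le> C' * \<bar>t - s\<bar> + 3 * S"
        unfolding C'_def by (rule real_bounds[OF imx' _ _ _ glo L1]) (use gp' stepA' in auto)
      show "\<bar>t - s\<bar> / C' - e' \<le> hdist (gamma A' z w t) (gamma A' z w s) \<and>
          hdist (gamma A' z w t) (gamma A' z w s) \<le> C' * \<bar>t - s\<bar> + e'"
      proof -
        have "S * real L \<ge> 0" using S1 by simp
        then show ?thesis using rb S1 unfolding e'_def by linarith
      qed
    qed
    moreover have "C' \<ge> 1" using L1 by (simp add: C'_def)
    moreover have "e' > 0" using S1 by (simp add: e'_def add_pos_nonneg)
    ultimately show ?thesis unfolding stab_W_def by blast
  qed
  show ?thesis using fin Fw main by blast
qed


definition letter2 :: "(nat \<Rightarrow> m2) \<Rightarrow> letter \<Rightarrow> m2" where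
  "letter2 A x = (if snd x then adj2 (A (fst x)) else A (fst x))"

fun eval2 :: "(nat \<Rightarrow> m2) \<Rightarrow> word \<Rightarrow> m2" where
  "eval2 A [] = mat 1"
| "eval2 A (x # u) = letter2 A x ** eval2 A u"

lemma eval_eval2: "good r A \<Longrightarrow> word_over r u \<Longrightarrow> eval A u = eval2 A u"
  by (induction u) (auto simp: word_over_def letter_mat_def letter2_def good_def matrix_inv_det1)

definition polyX :: "complex \<Rightarrow> m2 \<Rightarrow> real" where
  "polyX z M = 1 + ((M$2$1 * ((Re z)\<^sup>2 - (Im z)\<^sup>2) + (M$2$2 - M$1$1) * Re z - M$1$2)\<^sup>2
                  + (2 * M$2$1 * Re z * Im z + (M$2$2 - M$1$1) * Im z)\<^sup>2) * (1 / (2 * (Im z)\<^sup>2))"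

lemma hdist_mob_self: assumes M: "det M = 1" and z: "Im z > 0"
  shows "hdist z (mob M z) = arcosh (polyX z M)"
proof -
  define dn where "dn = den M z"
  define nm where "nm = of_real (M$1$1) * z + of_real (M$1$2)"
  have dn0: "dn \<noteq> 0" using den_nz[OF M z] by (simp add: dn_def)
  have w: "mob M z = nm / dn" by (simp add: mob_den nm_def dn_def)
  have imw: "Im (mob M z) = Im z / (cmod dn)\<^sup>2" using Im_mob[OF M z] by (simp add: dn_def)
  have zw: "z - mob M z = (z * dn - nm) / dn" using dn0 by (simp add: w field_simps)
  have "(cmod (z - mob M z))\<^sup>2 / (2 * Im z * Im (mob M z)) = (cmod (z * dn - nm))\<^sup>2 / (2 * (Im z)\<^sup>2)"
    using dn0 z by (simp add: zw imw norm_divide power_divide field_simps power2_eq_square)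
  also have "(cmod (z * dn - nm))\<^sup>2 = (M$2$1 * ((Re z)\<^sup>2 - (Im z)\<^sup>2) + (M$2$2 - M$1$1) * Re z - M$1$2)\<^sup>2
                  + (2 * M$2$1 * Re z * Im z + (M$2$2 - M$1$1) * Im z)\<^sup>2"
  proof -
    have r: "Re (z * dn - nm) = M$2$1 * ((Re z)\<^sup>2 - (Im z)\<^sup>2) + (M$2$2 - M$1$1) * Re z - M$1$2"
      by (simp add: dn_def nm_def den_def power2_eq_square algebra_simps)
    have i: "Im (z * dn - nm) = 2 * M$2$1 * Re z * Im z + (M$2$2 - M$1$1) * Im z"
      by (simp add: dn_def nm_def den_def power2_eq_square algebra_simps)
    show ?thesis by (simp only: cmod_power2 r i)
  qed
  finally show ?thesis by (simp add: hdist_def polyX_def)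
qed

lemma polyX_ge1: "polyX z M \<ge> 1"
  by (simp add: polyX_def)

lemma fd_poly: "good r A \<Longrightarrow> word_over r u \<Longrightarrow> Im z > 0 \<Longrightarrow> fd A z u = arcosh (polyX z (eval2 A u))"
  using hdist_mob_self[OF det_eval] eval_eval2 by (simp add: fd_def)

lemma cont_entry: assumes "i < r"
  shows "continuous_map (rep_top r) euclideanreal (\<lambda>A. A i $ a $ b)"
proof -
  have c1: "continuous_map (rep_top r) euclidean (\<lambda>A. A i)"
    unfolding rep_top_def
    by (rule continuous_map_from_subtopology[OF continuous_map_product_projection]) (use assms in simp)
  have c2: "continuous_map euclidean euclideanreal (\<lambda>M::m2. M $ a $ b)"
    by (simp add: continuous_on_component continuous_on_id)
  show ?thesis using continuous_map_compose[OF c1 c2] by (simp add: o_def)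
qed

lemma cont_eval2: assumes "word_over r u"
  shows "continuous_map (rep_top r) euclideanreal (\<lambda>A. eval2 A u $ a $ b)"
  using assms
proof (induction u arbitrary: a b)
  case Nil
  show ?case by (simp add: mat_def)
next
  case (Cons x u)
  have x: "fst x < r" and u: "word_over r u" using Cons.prems by (auto simp: word_over_def)
  have le: "continuous_map (rep_top r) euclideanreal (\<lambda>A. letter2 A x $ a' $ b')" for a' b'
  proof (cases "snd x")
    case True
    have "(\<lambda>A. letter2 A x $ a' $ b') = (\<lambda>A. adj2 (A (fst x)) $ a' $ b')" by (simp add: letter2_def True)
    moreover have "continuous_map (rep_top r) euclideanreal (\<lambda>A. adj2 (A (fst x)) $ a' $ b')"
      using cont_entry[OF x] exhaust_2[of a'] exhaust_2[of b']
      by (auto intro!: continuous_map_minus simp: adj2_def)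
    ultimately show ?thesis by simp
  next
    case False
    then show ?thesis using cont_entry[OF x] by (simp add: letter2_def)
  qed
  show ?case
    by (simp, intro continuous_map_add continuous_map_real_mult le Cons.IH[OF u])
qed

lemma cont_fd: assumes "word_over r u"
  shows "continuous_map (rep_top r) euclideanreal (\<lambda>A. arcosh (polyX z (eval2 A u)))"
proof -
  have p: "continuous_map (rep_top r) euclideanreal (\<lambda>A. polyX z (eval2 A u))"
    unfolding polyX_def
    by (intro continuous_map_add continuous_map_diff continuous_map_real_mult continuous_map_real_pow
        continuous_map_canonical_const cont_eval2[OF assms])
  have p': "continuous_map (rep_top r) (subtopology euclideanreal {1..}) (\<lambda>A. polyX z (eval2 A u))"
    using p polyX_ge1 by (simp add: continuous_map_into_subtopology)
  have ac: "continuous_map (subtopology euclideanreal {1..}) euclideanreal arcosh"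
    by (simp add: continuous_on_arcosh)
  show ?thesis using continuous_map_compose[OF p' ac] by (simp add: o_def)
qed


lemma topspace_rep: "topspace (rep_top r) = {A. A \<in> topspace (product_topology (\<lambda>i. euclidean) {..<r}) \<and> (\<forall>i<r. det (A i) = 1)}"
  by (auto simp: rep_top_def)

lemma good_top: "A \<in> topspace (rep_top r) \<Longrightarrow> good r A"
  by (simp add: topspace_rep good_def)

lemma stab_nbhd:
  assumes W: "\<forall>w\<in>W. w \<noteq> [] \<and> word_over r w"
    and A0: "A0 \<in> topspace (rep_top r)" and z: "Im z > 0" and st: "stab_W W A0 z"
  shows "\<exists>U. openin (rep_top r) U \<and> A0 \<in> U \<and> (\<forall>A'\<in>U. stab_W W A' z)"
proof -
  have g0: "good r A0" by (rule good_top[OF A0])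
  obtain F where fin: "finite F" and Fw: "\<forall>u\<in>F. word_over r u"
    and cl: "\<forall>A'. good r A' \<and> (\<forall>u\<in>F. \<bar>fd A' z u - fd A0 z u\<bar> < 1) \<longrightarrow> stab_W W A' z"
    using stab_open_core[OF W g0 z st] by blast
  define g where "g u A = arcosh (polyX z (eval2 A u))" for u A
  define U where "U = (\<Inter>u\<in>F. {A \<in> topspace (rep_top r). g u A \<in> ball (g u A0) 1}) \<inter> topspace (rep_top r)"
  have op: "openin (rep_top r) U"
    unfolding U_def
  proof (rule openin_INT[OF fin])
    fix u assume "u \<in> F"
    then have "word_over r u" using Fw by blast
    then have "continuous_map (rep_top r) euclideanreal (g u)" unfolding g_def by (rule cont_fd)
    then show "openin (rep_top r) {A \<in> topspace (rep_top r). g u A \<in> ball (g u A0) 1}"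
      by (rule openin_continuous_map_preimage) simp
  qed
  have inU: "A0 \<in> U" using A0 by (simp add: U_def)
  have "stab_W W A' z" if A': "A' \<in> U" for A'
  proof -
    have t: "A' \<in> topspace (rep_top r)" using A' by (simp add: U_def)
    have g': "good r A'" by (rule good_top[OF t])
    have "\<bar>fd A' z u - fd A0 z u\<bar> < 1" if u: "u \<in> F" for u
    proof -
      have "g u A' \<in> ball (g u A0) 1" using A' u by (simp add: U_def)
      then have "\<bar>g u A' - g u A0\<bar> < 1" by (simp add: dist_real_def abs_minus_commute)
      then show ?thesis using fd_poly[OF g' _ z] fd_poly[OF g0 _ z] Fw u by (simp add: g_def)
    qed
    then show ?thesis using cl g' by blast
  qed
  then show ?thesis using op inU by blast
qed

definition Wset :: "nat \<Rightarrow> nat \<Rightarrow> word set" where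
  "Wset g n = {w. cyc_reduced w \<and> nonsep_scc g n w}"

lemma Wset_good: "\<forall>w\<in>Wset g n. w \<noteq> [] \<and> word_over (rk g n) w"
  by (auto simp: Wset_def cyc_reduced_def nonsep_scc_def)

lemma ss_iff: "simple_stable g n A \<longleftrightarrow> (\<exists>z. Im z > 0 \<and> stab_W (Wset g n) A z)"
  unfolding simple_stable_def stab_W_def Wset_def by blast

lemma ss_nbhd:
  assumes A0: "A0 \<in> topspace (rep_top (rk g n))" and ss: "simple_stable g n A0"
  shows "\<exists>U. openin (rep_top (rk g n)) U \<and> A0 \<in> U \<and> (\<forall>A'\<in>U. simple_stable g n A')"
proof -
  obtain z where z: "Im z > 0" and st: "stab_W (Wset g n) A0 z" using ss ss_iff by blast
  obtain U where "openin (rep_top (rk g n)) U" "A0 \<in> U" "\<forall>A'\<in>U. stab_W (Wset g n) A' z"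
    using stab_nbhd[OF Wset_good A0 z st] by blast
  then show ?thesis using z ss_iff by blast
qed


lemma scale_mult_left: "((c::real) *\<^sub>R (M::m2)) ** (N::m2) = c *\<^sub>R (M ** N)"
  by (simp add: m2_eq_iff algebra_simps)
lemma scale_mult_right: "(M::m2) ** ((c::real) *\<^sub>R (N::m2)) = c *\<^sub>R (M ** N)"
  by (simp add: m2_eq_iff algebra_simps)
lemma adj2_mult: "adj2 ((M::m2) ** (N::m2)) = adj2 N ** adj2 M"
  by (simp add: m2_eq_iff algebra_simps)
lemma adj2_adj2 [simp]: "adj2 (adj2 M) = M"
  by (simp add: m2_eq_iff)
lemma adj2_scale: "adj2 ((c::real) *\<^sub>R M) = c *\<^sub>R adj2 M"
  by (simp add: m2_eq_iff)
lemma det_scale: "det ((c::real) *\<^sub>R (M::m2)) = c^2 * det M"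
  by (simp add: det2 power2_eq_square algebra_simps)
lemma adj2_mat1 [simp]: "adj2 (mat 1) = mat 1"
  by (simp add: m2_eq_iff)

lemma conj_eval:
  assumes A: "good r A" and G: "det G = 1"
    and B: "\<forall>i<r. (\<epsilon> i = 1 \<or> \<epsilon> i = (-1::real)) \<and> B i = \<epsilon> i *\<^sub>R (G ** A i ** adj2 G)"
    and u: "word_over r u"
  shows "\<exists>\<sigma>. (\<sigma> = 1 \<or> \<sigma> = (-1::real)) \<and> eval B u = \<sigma> *\<^sub>R (G ** eval A u ** adj2 G)"
  using u
proof (induction u)
  case Nil
  then show ?case by (intro exI[of _ 1]) (simp add: adj2_inv(1)[OF G])
next
  case (Cons x u)
  have x: "fst x < r" and uu: "word_over r u" using Cons.prems by (auto simp: word_over_def)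
  obtain \<sigma> where s: "\<sigma> = 1 \<or> \<sigma> = -1" and e: "eval B u = \<sigma> *\<^sub>R (G ** eval A u ** adj2 G)"
    using Cons.IH[OF uu] by blast
  have dA: "det (A (fst x)) = 1" using A x by (simp add: good_def)
  have eps: "\<epsilon> (fst x) = 1 \<or> \<epsilon> (fst x) = -1" and Bx: "B (fst x) = \<epsilon> (fst x) *\<^sub>R (G ** A (fst x) ** adj2 G)"
    using B x by auto
  have dB: "det (B (fst x)) = 1"
    using eps by (auto simp: Bx det_scale det_mult2 G dA)
  have L: "letter_mat B x = \<epsilon> (fst x) *\<^sub>R (G ** letter_mat A x ** adj2 G)"
  proof (cases "snd x")
    case True
    then have "letter_mat B x = adj2 (B (fst x))" by (simp add: letter_mat_def matrix_inv_det1[OF dB])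
    also have "\<dots> = \<epsilon> (fst x) *\<^sub>R (G ** adj2 (A (fst x)) ** adj2 G)"
      by (simp add: Bx adj2_scale adj2_mult matrix_mul_assoc)
    finally show ?thesis using True by (simp add: letter_mat_def matrix_inv_det1[OF dA])
  next
    case False
    then show ?thesis by (simp add: letter_mat_def Bx)
  qed
  have "eval B (x # u) = (\<epsilon> (fst x) * \<sigma>) *\<^sub>R (G ** letter_mat A x ** (adj2 G ** G) ** eval A u ** adj2 G)"
    by (simp add: L e scale_mult_left scale_mult_right matrix_mul_assoc)
  also have "\<dots> = (\<epsilon> (fst x) * \<sigma>) *\<^sub>R (G ** eval A (x # u) ** adj2 G)"
    by (simp add: adj2_inv(2)[OF G] matrix_mul_assoc)
  finally show ?case using s eps by (intro exI[of _ "\<epsilon> (fst x) * \<sigma>"]) auto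
qed

lemma conj_Xp:
  assumes A: "good r A" and B: "good r B" and G: "det G = 1"
    and BA: "\<forall>i<r. (\<epsilon> i = 1 \<or> \<epsilon> i = (-1::real)) \<and> B i = \<epsilon> i *\<^sub>R (G ** A i ** adj2 G)"
    and w: "word_over r w" and z: "Im z > 0"
  shows "Xp B (mob G z) w k = mob G (Xp A z w k)"
proof -
  let ?E = "eval A (vert w k)"
  have dE: "det ?E = 1" using det_eval[OF A word_over_vert[OF w]] .
  obtain \<sigma> where s: "\<sigma> = 1 \<or> \<sigma> = -1" and e: "eval B (vert w k) = \<sigma> *\<^sub>R (G ** ?E ** adj2 G)"
    using conj_eval[OF A G BA word_over_vert[OF w]] by blast
  have zG: "Im (mob G z) > 0" using Im_mob_pos[OF G z] .
  have "Xp B (mob G z) w k = mob (\<sigma> *\<^sub>R (G ** ?E ** adj2 G)) (mob G z)"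
    by (simp add: Xp_def e)
  also have "\<dots> = mob (G ** ?E ** adj2 G) (mob G z)"
    using s by (intro mob_scale) auto
  also have "\<dots> = mob (G ** ?E) (mob (adj2 G) (mob G z))"
    by (rule mob_mult) (use G zG in simp_all)
  also have "\<dots> = mob (G ** ?E) z" using mob_adj2[OF G z] by simp
  also have "\<dots> = mob G (mob ?E z)" by (rule mob_mult[OF dE z])
  finally show ?thesis by (simp add: Xp_def)
qed

lemma conj_gamma:
  assumes A: "good r A" and B: "good r B" and G: "det G = 1"
    and BA: "\<forall>i<r. (\<epsilon> i = 1 \<or> \<epsilon> i = (-1::real)) \<and> B i = \<epsilon> i *\<^sub>R (G ** A i ** adj2 G)"
    and w: "word_over r w" and z: "Im z > 0"
  shows "gamma B (mob G z) w t = mob G (gamma A z w t)"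
proof -
  have s: "0 \<le> t - of_int \<lfloor>t\<rfloor>" "t - of_int \<lfloor>t\<rfloor> \<le> 1" by linarith+
  show ?thesis
    unfolding gamma_Xp conj_Xp[OF assms]
    by (rule geod_pt_mob[OF G Xp_im[OF A w z] Xp_im[OF A w z] s])
qed

lemma conj_stab:
  assumes W: "\<forall>w\<in>W. word_over r w"
    and A: "good r A" and B: "good r B" and G: "det G = 1"
    and BA: "\<forall>i<r. (\<epsilon> i = 1 \<or> \<epsilon> i = (-1::real)) \<and> B i = \<epsilon> i *\<^sub>R (G ** A i ** adj2 G)"
    and z: "Im z > 0" and st: "stab_W W A z"
  shows "stab_W W B (mob G z)"
proof -
  have "hdist (gamma B (mob G z) w t) (gamma B (mob G z) w s) = hdist (gamma A z w t) (gamma A z w s)"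
    if "w \<in> W" for w t s
  proof -
    have w: "word_over r w" using W that by blast
    show ?thesis
      using conj_gamma[OF A B G BA w z] hdist_mob[OF G] gamma_props[OF A w z] by simp
  qed
  then show ?thesis using st unfolding stab_W_def by simp
qed

lemma NE_good: "A \<in> NE r \<Longrightarrow> good r A"
  by (simp add: NE_def good_top)

lemma conj_ss:
  assumes AB: "(A, B) \<in> conj_rel (rk g n)" and ss: "simple_stable g n A"
  shows "simple_stable g n B"
proof -
  let ?r = "rk g n"
  obtain G \<epsilon> where G: "det G = 1" and BA0: "\<forall>i<?r. (\<epsilon> i = 1 \<or> \<epsilon> i = (-1::real)) \<and> B i = \<epsilon> i *\<^sub>R (G ** A i ** matrix_inv G)"
    and A: "A \<in> NE ?r" and B: "B \<in> NE ?r"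
    using AB unfolding conj_rel_def by blast
  have BA: "\<forall>i<?r. (\<epsilon> i = 1 \<or> \<epsilon> i = (-1::real)) \<and> B i = \<epsilon> i *\<^sub>R (G ** A i ** adj2 G)"
    using BA0 matrix_inv_det1[OF G] by simp
  obtain z where z: "Im z > 0" and st: "stab_W (Wset g n) A z" using ss ss_iff by blast
  have "stab_W (Wset g n) B (mob G z)"
    by (rule conj_stab[OF _ NE_good[OF A] NE_good[OF B] G BA z st]) (use Wset_good in blast)
  then show ?thesis using ss_iff Im_mob_pos[OF G z] by blast
qed


lemma conj_rel_alt: "(A, B) \<in> conj_rel r \<longleftrightarrow> A \<in> NE r \<and> B \<in> NE r \<and>
   (\<exists>G \<epsilon>. det G = 1 \<and> (\<forall>i<r. (\<epsilon> i = 1 \<or> \<epsilon> i = (-1::real)) \<and> B i = \<epsilon> i *\<^sub>R (G ** A i ** adj2 G)))"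
proof -
  have "(\<exists>G \<epsilon>. det G = 1 \<and> (\<forall>i<r. (\<epsilon> i = 1 \<or> \<epsilon> i = (-1::real)) \<and> B i = \<epsilon> i *\<^sub>R (G ** A i ** matrix_inv G)))
     \<longleftrightarrow> (\<exists>G \<epsilon>. det G = 1 \<and> (\<forall>i<r. (\<epsilon> i = 1 \<or> \<epsilon> i = (-1::real)) \<and> B i = \<epsilon> i *\<^sub>R (G ** A i ** adj2 G)))"
  proof
    assume "\<exists>G \<epsilon>. det G = 1 \<and> (\<forall>i<r. (\<epsilon> i = 1 \<or> \<epsilon> i = (-1::real)) \<and> B i = \<epsilon> i *\<^sub>R (G ** A i ** matrix_inv G))"
    then obtain G \<epsilon> where G: "det G = 1" "\<forall>i<r. (\<epsilon> i = 1 \<or> \<epsilon> i = (-1::real)) \<and> B i = \<epsilon> i *\<^sub>R (G ** A i ** matrix_inv G)"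
      by blast
    then show "\<exists>G \<epsilon>. det G = 1 \<and> (\<forall>i<r. (\<epsilon> i = 1 \<or> \<epsilon> i = (-1::real)) \<and> B i = \<epsilon> i *\<^sub>R (G ** A i ** adj2 G))"
      by (intro exI[of _ G] exI[of _ \<epsilon>]) (simp add: matrix_inv_det1[OF G(1)])
  next
    assume "\<exists>G \<epsilon>. det G = 1 \<and> (\<forall>i<r. (\<epsilon> i = 1 \<or> \<epsilon> i = (-1::real)) \<and> B i = \<epsilon> i *\<^sub>R (G ** A i ** adj2 G))"
    then obtain G \<epsilon> where G: "det G = 1" "\<forall>i<r. (\<epsilon> i = 1 \<or> \<epsilon> i = (-1::real)) \<and> B i = \<epsilon> i *\<^sub>R (G ** A i ** adj2 G)"
      by blast
    then show "\<exists>G \<epsilon>. det G = 1 \<and> (\<forall>i<r. (\<epsilon> i = 1 \<or> \<epsilon> i = (-1::real)) \<and> B i = \<epsilon> i *\<^sub>R (G ** A i ** matrix_inv G))"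
      by (intro exI[of _ G] exI[of _ \<epsilon>]) (simp add: matrix_inv_det1[OF G(1)])
  qed
  then show ?thesis unfolding conj_rel_def by simp
qed

lemma conj_relI:
  assumes "A \<in> NE r" "B \<in> NE r" "det G = 1"
    "\<forall>i<r. (\<epsilon> i = 1 \<or> \<epsilon> i = (-1::real)) \<and> B i = \<epsilon> i *\<^sub>R (G ** A i ** adj2 G)"
  shows "(A, B) \<in> conj_rel r"
  unfolding conj_rel_alt
  apply (intro conjI)
    apply (rule assms(1))
   apply (rule assms(2))
  apply (rule exI[of _ G])
  apply (rule exI[of _ \<epsilon>])
  apply (intro conjI)
   apply (rule assms(3))
  apply (rule assms(4))
  done

lemma conj_relE:
  assumes "(A, B) \<in> conj_rel r"
  obtains G \<epsilon> where "A \<in> NE r" "B \<in> NE r" "det G = 1"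
    "\<forall>i<r. (\<epsilon> i = 1 \<or> \<epsilon> i = (-1::real)) \<and> B i = \<epsilon> i *\<^sub>R (G ** A i ** adj2 G)"
proof -
  have "A \<in> NE r \<and> B \<in> NE r \<and>
   (\<exists>G \<epsilon>. det G = 1 \<and> (\<forall>i<r. (\<epsilon> i = 1 \<or> \<epsilon> i = (-1::real)) \<and> B i = \<epsilon> i *\<^sub>R (G ** A i ** adj2 G)))"
    using assms by (simp only: conj_rel_alt)
  then show ?thesis using that by blast
qed

lemma equiv_conj: "equiv (NE r) (conj_rel r)"
proof (rule equivI)
  show "conj_rel r \<subseteq> NE r \<times> NE r"
  proof
    fix p assume p: "p \<in> conj_rel r"
    obtain A B where pe: "p = (A, B)" by (cases p)
    then have "(A, B) \<in> conj_rel r" using p by simp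
    then have "A \<in> NE r" "B \<in> NE r" by (auto elim: conj_relE)
    then show "p \<in> NE r \<times> NE r" using pe by simp
  qed
  show "refl_on (NE r) (conj_rel r)"
  proof (rule refl_onI)
    fix A assume A: "A \<in> NE r"
    have "\<forall>i<r. ((\<lambda>i. 1::real) i = 1 \<or> (\<lambda>i. 1::real) i = -1) \<and> A i = (\<lambda>i. 1::real) i *\<^sub>R (mat 1 ** A i ** adj2 (mat 1))"
      by simp
    then show "(A, A) \<in> conj_rel r" using conj_relI[of A r A "mat 1" "\<lambda>i. 1"] A by simp
  qed
  show "sym (conj_rel r)"
  proof (rule symI)
    fix A B assume "(A, B) \<in> conj_rel r"
    then obtain G \<epsilon> where AB: "A \<in> NE r" "B \<in> NE r" and G: "det G = 1"
      and e: "\<forall>i<r. (\<epsilon> i = 1 \<or> \<epsilon> i = (-1::real)) \<and> B i = \<epsilon> i *\<^sub>R (G ** A i ** adj2 G)"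
      by (rule conj_relE)
    have Ai: "A i = \<epsilon> i *\<^sub>R (adj2 G ** B i ** adj2 (adj2 G))" if i: "i < r" for i
    proof -
      have ei: "\<epsilon> i = 1 \<or> \<epsilon> i = -1" and Bi: "B i = \<epsilon> i *\<^sub>R (G ** A i ** adj2 G)" using e i by auto
      have ee: "\<epsilon> i * \<epsilon> i = 1" using ei by auto
      have "adj2 G ** B i ** adj2 (adj2 G) = \<epsilon> i *\<^sub>R ((adj2 G ** G) ** A i ** (adj2 G ** G))"
        unfolding Bi by (simp add: scale_mult_left scale_mult_right matrix_mul_assoc)
      also have "\<dots> = \<epsilon> i *\<^sub>R A i" by (simp add: adj2_inv(2)[OF G])
      finally show ?thesis using ee by simp
    qed
    have all: "\<forall>i<r. (\<epsilon> i = 1 \<or> \<epsilon> i = (-1::real)) \<and> A i = \<epsilon> i *\<^sub>R (adj2 G ** B i ** adj2 (adj2 G))"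
      using e Ai by blast
    have dG: "det (adj2 G) = 1" using G by simp
    show "(B, A) \<in> conj_rel r" by (rule conj_relI[OF AB(2) AB(1) dG all])
  qed
  show "trans (conj_rel r)"
  proof (rule transI)
    fix A B C assume AB0: "(A, B) \<in> conj_rel r" and BC0: "(B, C) \<in> conj_rel r"
    obtain G1 e1 where AB: "A \<in> NE r" and G1: "det G1 = 1"
      and e1: "\<forall>i<r. (e1 i = 1 \<or> e1 i = (-1::real)) \<and> B i = e1 i *\<^sub>R (G1 ** A i ** adj2 G1)"
      using AB0 by (rule conj_relE)
    obtain G2 e2 where BC: "C \<in> NE r" and G2: "det G2 = 1"
      and e2: "\<forall>i<r. (e2 i = 1 \<or> e2 i = (-1::real)) \<and> C i = e2 i *\<^sub>R (G2 ** B i ** adj2 G2)"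
      using BC0 by (rule conj_relE)
    have Ci: "C i = (e2 i * e1 i) *\<^sub>R ((G2 ** G1) ** A i ** adj2 (G2 ** G1))" if i: "i < r" for i
    proof -
      have c: "C i = e2 i *\<^sub>R (G2 ** B i ** adj2 G2)" using e2 i by blast
      have b: "B i = e1 i *\<^sub>R (G1 ** A i ** adj2 G1)" using e1 i by blast
      show ?thesis unfolding c b by (simp add: scale_mult_left scale_mult_right adj2_mult matrix_mul_assoc)
    qed
    have sg: "e2 i * e1 i = 1 \<or> e2 i * e1 i = -1" if "i < r" for i
    proof -
      have "e1 i = 1 \<or> e1 i = -1" "e2 i = 1 \<or> e2 i = -1" using e1 e2 that by blast+
      then show ?thesis by auto
    qed
    have dG: "det (G2 ** G1) = 1" using G1 G2 by (simp add: det_mult2)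
    have all: "\<forall>i<r. ((\<lambda>i. e2 i * e1 i) i = 1 \<or> (\<lambda>i. e2 i * e1 i) i = -1) \<and> C i = (\<lambda>i. e2 i * e1 i) i *\<^sub>R ((G2 ** G1) ** A i ** adj2 (G2 ** G1))"
      using Ci sg by simp
    show "(A, C) \<in> conj_rel r" using conj_relI[of A r C "G2 ** G1" "\<lambda>i. e2 i * e1 i"] AB BC dG all by simp
  qed
qed

lemma istop_quot:
  assumes disj: "\<And>X Y. X \<in> Q \<Longrightarrow> Y \<in> Q \<Longrightarrow> X = Y \<or> X \<inter> Y = {}"
  shows "istopology (\<lambda>U. U \<subseteq> Q \<and> openin T (\<Union>U))"
proof -
  have i: "S \<inter> S' \<subseteq> Q \<and> openin T (\<Union>(S \<inter> S'))"
    if S: "S \<subseteq> Q \<and> openin T (\<Union>S)" and S': "S' \<subseteq> Q \<and> openin T (\<Union>S')" for S S'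
  proof -
    have "\<Union>(S \<inter> S') = \<Union>S \<inter> \<Union>S'"
    proof
      show "\<Union>(S \<inter> S') \<subseteq> \<Union>S \<inter> \<Union>S'" by blast
      show "\<Union>S \<inter> \<Union>S' \<subseteq> \<Union>(S \<inter> S')"
      proof
        fix x assume "x \<in> \<Union>S \<inter> \<Union>S'"
        then obtain X Y where XY: "X \<in> S" "Y \<in> S'" "x \<in> X" "x \<in> Y" by blast
        have "X \<in> Q" "Y \<in> Q" using XY S S' by blast+
        then have "X = Y \<or> X \<inter> Y = {}" by (rule disj)
        then show "x \<in> \<Union>(S \<inter> S')" using XY by blast
      qed
    qed
    then show ?thesis using S S' by auto
  qed
  have u: "\<Union>K \<subseteq> Q \<and> openin T (\<Union>(\<Union>K))" if K: "\<forall>U\<in>K. U \<subseteq> Q \<and> openin T (\<Union>U)" for K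
  proof -
    have "\<Union>(\<Union>K) = \<Union>((\<lambda>U. \<Union>U) ` K)" by blast
    moreover have "openin T (\<Union>((\<lambda>U. \<Union>U) ` K))" using K by blast
    ultimately show ?thesis using K by auto
  qed
  show ?thesis unfolding istopology_def using i u by blast
qed

lemma istop_X: "istopology (\<lambda>U. U \<subseteq> Xspace g n \<and> openin (subtopology (rep_top (rk g n)) (NE (rk g n))) (\<Union>U))"
  by (rule istop_quot) (use quotient_disj[OF equiv_conj] in \<open>simp add: Xspace_def\<close>)

lemma openin_Xtop: "openin (Xtop g n) U \<longleftrightarrow> U \<subseteq> Xspace g n \<and> openin (subtopology (rep_top (rk g n)) (NE (rk g n))) (\<Union>U)"
  unfolding Xtop_def topology_inverse'[OF istop_X] by (rule refl)

theorem main_open: "openin (Xtop g n) (SS g n)"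
proof -
  let ?r = "rk g n"
  let ?T = "subtopology (rep_top ?r) (NE ?r)"
  have sub: "SS g n \<subseteq> Xspace g n"
  proof
    fix X assume "X \<in> SS g n"
    then obtain A where "X = conj_rel ?r `` {A}" "A \<in> NE ?r" unfolding SS_def by blast
    then show "X \<in> Xspace g n" unfolding Xspace_def by (simp add: quotientI)
  qed
  have "openin ?T (\<Union>(SS g n))"
  proof (rule openin_subopen[THEN iffD2], rule ballI)
    fix B assume "B \<in> \<Union>(SS g n)"
    then obtain X where X: "X \<in> SS g n" "B \<in> X" by blast
    then obtain A where A: "A \<in> NE ?r" "simple_stable g n A" and XA: "X = conj_rel ?r `` {A}"
      unfolding SS_def by blast
    have AB: "(A, B) \<in> conj_rel ?r" using X XA by blast
    have B: "B \<in> NE ?r" using AB by (simp add: conj_rel_def)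
    have ssB: "simple_stable g n B" by (rule conj_ss[OF AB A(2)])
    have Bt: "B \<in> topspace (rep_top ?r)" using B by (simp add: NE_def)
    obtain U where U: "openin (rep_top ?r) U" "B \<in> U" "\<forall>A'\<in>U. simple_stable g n A'"
      using ss_nbhd[OF Bt ssB] by blast
    have "openin ?T (NE ?r \<inter> U)" by (rule openin_subtopology_Int2[OF U(1)])
    moreover have "B \<in> NE ?r \<inter> U" using B U by simp
    moreover have "NE ?r \<inter> U \<subseteq> \<Union>(SS g n)"
    proof
      fix A' assume A': "A' \<in> NE ?r \<inter> U"
      then have "conj_rel ?r `` {A'} \<in> SS g n" using U(3) unfolding SS_def by blast
      moreover have "A' \<in> conj_rel ?r `` {A'}" using equiv_class_self[OF equiv_conj] A' by blast
      ultimately show "A' \<in> \<Union>(SS g n)" by blast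
    qed
    ultimately show "\<exists>T. openin ?T T \<and> B \<in> T \<and> T \<subseteq> \<Union>(SS g n)" by blast
  qed
  then show ?thesis using sub by (simp add: openin_Xtop)
qed

theorem theorem4p6:
  fixes g n :: nat
  assumes "g \<ge> 1" and "n \<ge> 1"
  shows "openin (Xtop g n) (SS g n)"
  by (rule main_open)

end
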